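(* Let $\rho>1$ and $\mathcal Q=\bigcup_{\mathsf x\in\mathcal X}Q_{\mathsf x}(\rho)$. If $\mathcal X$ is a square lattice, then $$\eta_{\mathcal Q}(\rho)=\frac{4\rho^2\arctan\!\left(\frac{\sqrt{2\rho^2-1}-1}{\sqrt{2\rho^2-1}+1}\right)-2\sqrt{2\rho^2-1}+2}{(\rho^2-1)^2}.$$ If $\mathcal X$ is a triangular lattice, then with $r=\sqrt{4\rho^2-1}$, $$\eta_{\mathcal Q}(\rho)=\frac{4\sqrt3\,\rho^2\arctan\!\left(\frac{r-\sqrt3}{\sqrt3\,r+1}\right)-\sqrt3\,r+3}{(\rho^2-1)^2}.$$ For both lattices, $\eta_{\mathcal Q}(\rho)<\frac{4}{(1+\rho)^2}$. In particular $\eta_{\mathcal Q}(\rho)\sim\pi\rho^{-2}$ (square) and $\eta_{\mathcal Q}(\rho)\sim\frac{2\pi}{\sqrt3}\rho^{-2}$ (triangular) as $\rho\to\infty$.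
   Context: Q cell: $Q_{\mathsf x}(\rho)=\{\mathsf y\in\mathbb{R}^2:\min_{\mathsf x'\in\mathcal X\setminus\{\mathsf x\}}\|\mathsf x'-\mathsf y\|>\rho\|\mathsf x-\mathsf y\|\}$. Area fraction of $B\subset\mathbb{R}^2$: $\eta_B=\lim_{r\to\infty}|B\cap b(o,r)|/(\pi r^2)$. The lattices may have any (positive) spacing, as the area fraction is scale invariant. *)

theory Defs
  imports "HOL-Analysis.Analysis" "HOL-Library.Landau_Symbols"
begin

type_synonym point = "real \<times> real"

definition Q_cell :: "point set \<Rightarrow> real \<Rightarrow> point \<Rightarrow> point set" where
  "Q_cell X \<rho> x = {y. (INF x'\<in>X - {x}. norm (x' - y)) > \<rho> * norm (x - y)}"

definition Q_union :: "point set \<Rightarrow> real \<Rightarrow> point set" where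
  "Q_union X \<rho> = (\<Union>x\<in>X. Q_cell X \<rho> x)"

definition area_fraction :: "point set \<Rightarrow> real" where
  "area_fraction B = Lim at_top (\<lambda>r. measure lborel (B \<inter> ball 0 r) / (pi * r\<^sup>2))"

definition square_lattice :: "real \<Rightarrow> point set" where
  "square_lattice a = {(a * of_int i, a * of_int j) | i j :: int. True}"

definition triangular_lattice :: "real \<Rightarrow> point set" where
  "triangular_lattice a =
     {(a * (of_int i + of_int j / 2), a * of_int j * sqrt 3 / 2) | i j :: int. True}"

end

theory Submission
  imports Defs "HOL-Real_Asymp.Real_Asymp"
begin


lemma measure_sym_slices:
  fixes G :: "(real \<times> real) set" and h :: "real \<Rightarrow> real"
  assumes G: "G \<in> sets borel" and sl: "\<And>p q. (p,q) \<in> G \<longleftrightarrow> \<bar>q\<bar> < h \<bar>p\<bar>"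
    and h0: "\<And>P. 0 \<le> P \<Longrightarrow> 0 \<le> h P" and hm: "\<And>P. m \<le> P \<Longrightarrow> h P = 0" and m: "0 \<le> m"
    and hI: "(h has_integral I) {0..m}"
  shows "emeasure lborel G = ennreal (4*I)" "measure lborel G = 4 * I"
proof -
  have Gs: "G \<in> sets (lborel \<Otimes>\<^sub>M lborel)" using G by (subst lborel_prod) simp
  have "emeasure lborel G = emeasure (lborel \<Otimes>\<^sub>M (lborel::real measure)) G" by (simp add: lborel_prod)
  also have "\<dots> = (\<integral>\<^sup>+p. emeasure lborel (Pair p -` G) \<partial>lborel)"
    using lborel.emeasure_pair_measure_alt[OF Gs] .
  also have "\<dots> = (\<integral>\<^sup>+p. ennreal (indicator {-m..m} p * (2 * h \<bar>p\<bar>)) \<partial>lborel)"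
  proof (rule nn_integral_cong)
    fix p :: real
    have e: "Pair p -` G = {- h \<bar>p\<bar> <..< h \<bar>p\<bar>}" using sl by auto
    have "emeasure lborel (Pair p -` G) = ennreal (2 * h \<bar>p\<bar>)"
      unfolding e using h0[of "\<bar>p\<bar>"] by simp
    moreover have "\<bar>p\<bar> > m \<Longrightarrow> h \<bar>p\<bar> = 0" using hm by simp
    ultimately show "emeasure lborel (Pair p -` G) = ennreal (indicator {-m..m} p * (2 * h \<bar>p\<bar>))"
      by (cases "p \<in> {-m..m}") (auto simp: indicator_def abs_if split: if_splits)
  qed
  also have "\<dots> = ennreal (4*I)"
  proof -
    have i1: "((\<lambda>p. 2 * h \<bar>p\<bar>) has_integral 2*I) {0..m}"
      by (rule has_integral_cong[THEN iffD1, OF _ has_integral_mult_right[OF hI]]) auto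
    have i2: "((\<lambda>p. 2 * h \<bar>p\<bar>) has_integral 2*I) {-m..0}"
    proof -
      have "((\<lambda>p. (\<lambda>p. 2 * h \<bar>p\<bar>) (-p)) has_integral 2*I) {-m..-0}"
        using i1 by (subst has_integral_reflect_real) simp
      then show ?thesis by simp
    qed
    have "((\<lambda>p. 2 * h \<bar>p\<bar>) has_integral (2*I + 2*I)) {-m..m}"
      using has_integral_combine[OF _ _ i2 i1] m by simp
    then have "(\<integral>\<^sup>+p. ennreal (indicator {-m..m} p * (2 * h \<bar>p\<bar>)) \<partial>lborel) = ennreal (2*I + 2*I)"
      by (intro nn_integral_has_integral_lebesgue) (use h0 in auto)
    then show ?thesis by simp
  qed
  finally show e: "emeasure lborel G = ennreal (4*I)" .
  have "I \<ge> 0" using has_integral_nonneg[OF hI] h0 by auto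
  then show "measure lborel G = 4 * I" using e by (simp add: measure_def)
qed


definition Fc :: "real \<Rightarrow> real \<Rightarrow> real" where
  "Fc R u = (u * sqrt (R\<^sup>2 - u\<^sup>2) + R\<^sup>2 * arcsin (u / R)) / 2"

lemma Fc_deriv:
  assumes R: "R > 0" and u: "-R < u" "u < R"
  shows "(Fc R has_real_derivative sqrt (R\<^sup>2 - u\<^sup>2)) (at u)"
proof -
  have "\<bar>u\<bar> < R" using u by auto
  then have "\<bar>u\<bar>^2 < R^2" by (intro power_strict_mono) auto
  then have pos: "R\<^sup>2 - u\<^sup>2 > 0" by simp
  have u1: "-1 < u / R" "u / R < 1" using u R by (auto simp: field_simps)
  have s: "sqrt (1 - (u/R)\<^sup>2) = sqrt (R\<^sup>2 - u\<^sup>2) / R"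
  proof -
    have "1 - (u/R)\<^sup>2 = (R\<^sup>2 - u\<^sup>2) / R\<^sup>2" using R by (simp add: field_simps)
    then show ?thesis using R by (simp add: real_sqrt_divide)
  qed
  have sq: "sqrt (R\<^sup>2 - u\<^sup>2) * sqrt (R\<^sup>2 - u\<^sup>2) = R\<^sup>2 - u\<^sup>2" using pos by simp
  have d1: "((\<lambda>u. sqrt (R\<^sup>2 - u\<^sup>2)) has_real_derivative (- u / sqrt (R\<^sup>2 - u\<^sup>2))) (at u)"
    using pos by (auto intro!: derivative_eq_intros simp: field_simps)
  have d2: "((\<lambda>u. arcsin (u/R)) has_real_derivative (inverse (sqrt (1 - (u/R)\<^sup>2)) * (1/R))) (at u)"
    using u1 R by (auto intro!: derivative_eq_intros DERIV_arcsin simp: field_simps)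
  have d: "(Fc R has_real_derivative
      (u * (- u / sqrt (R\<^sup>2 - u\<^sup>2)) + 1 * sqrt (R\<^sup>2 - u\<^sup>2) + R\<^sup>2 * (inverse (sqrt (1 - (u/R)\<^sup>2)) * (1/R))) / 2) (at u)"
    unfolding Fc_def[abs_def]
    by (intro DERIV_cdivide DERIV_add DERIV_mult' DERIV_cmult d1 d2 DERIV_ident)
  have e: "(u * (- u / sqrt (R\<^sup>2 - u\<^sup>2)) + 1 * sqrt (R\<^sup>2 - u\<^sup>2) + R\<^sup>2 * (inverse (sqrt (1 - (u/R)\<^sup>2)) * (1/R))) / 2
     = sqrt (R\<^sup>2 - u\<^sup>2)"
    unfolding s using pos R sq by (simp add: field_simps power2_eq_square)
  from d[unfolded e] show ?thesis .
qed

lemma circ_int: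
  assumes R: "R > 0" and ab: "a \<le> b" and d: "-R \<le> a + d" "b + d \<le> R"
  shows "((\<lambda>p. sqrt (R\<^sup>2 - (p+d)\<^sup>2)) has_integral (Fc R (b+d) - Fc R (a+d))) {a..b}"
proof -
  have "((\<lambda>p. sqrt (R\<^sup>2 - (p+d)\<^sup>2)) has_integral ((\<lambda>p. Fc R (p+d)) b - (\<lambda>p. Fc R (p+d)) a)) {a..b}"
  proof (rule fundamental_theorem_of_calculus_interior[OF ab])
    show "continuous_on {a..b} (\<lambda>p. Fc R (p + d))"
      unfolding Fc_def
    proof (intro continuous_intros ballI conjI)
      fix x assume "x \<in> {a..b}"
      then have "-R \<le> x + d" "x + d \<le> R" using d by auto
      then show "-1 \<le> (x+d)/R" "(x+d)/R \<le> 1" using R by (auto simp: field_simps)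
    qed (use R in auto)
  next
    fix x assume x: "x \<in> {a<..<b}"
    then have "-R < x + d" "x + d < R" using d by auto
    from Fc_deriv[OF R this] have "((\<lambda>p. Fc R (p+d)) has_real_derivative sqrt (R\<^sup>2 - (x+d)\<^sup>2) * 1) (at x)"
      by (intro DERIV_chain2[where f="Fc R" and g="\<lambda>p. p + d"]) (auto intro!: derivative_eq_intros)
    then show "((\<lambda>p. Fc R (p + d)) has_vector_derivative sqrt (R\<^sup>2 - (x+d)\<^sup>2)) (at x)"
      by (simp add: has_real_derivative_iff_has_vector_derivative)
  qed
  then show ?thesis by simp
qed


definition Gset :: "real \<Rightarrow> real \<Rightarrow> real \<Rightarrow> real \<Rightarrow> (real \<times> real) set" where
  "Gset k kx ky R = {z. (\<bar>fst z\<bar> + k)\<^sup>2 + (snd z)\<^sup>2 < R\<^sup>2 \<and> (\<bar>fst z\<bar> + kx)\<^sup>2 + (\<bar>snd z\<bar> + ky)\<^sup>2 < R\<^sup>2}"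

lemma Gset_open: "open (Gset k kx ky R)"
  unfolding Gset_def by (intro open_Collect_conj open_Collect_less continuous_intros)

lemma sqrt_gt_iff_sq: "0 \<le> x \<Longrightarrow> x < sqrt y \<longleftrightarrow> x\<^sup>2 < y"
  by (metis abs_of_nonneg real_less_rsqrt real_sqrt_abs real_sqrt_less_iff)

lemma key_id:
  fixes kx ky k t P Q :: real
  assumes kk: "kx\<^sup>2 + ky\<^sup>2 = k\<^sup>2" and t: "t * ky = k - kx"
  shows "(P+kx)\<^sup>2 + (Q+ky)\<^sup>2 - ((P+k)\<^sup>2 + Q\<^sup>2) = 2*ky*(Q - t*P)"
proof -
  have "(P+kx)\<^sup>2 + (Q+ky)\<^sup>2 - ((P+k)\<^sup>2 + Q\<^sup>2) = 2*ky*Q - 2*(k - kx)*P + (kx\<^sup>2 + ky\<^sup>2 - k\<^sup>2)"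
    by (simp add: power2_eq_square algebra_simps)
  also have "\<dots> = 2*ky*(Q - t*P)" using kk t[symmetric] by (simp add: algebra_simps)
  finally show ?thesis .
qed

lemma slice_lo:
  assumes kk: "kx\<^sup>2 + ky\<^sup>2 = k\<^sup>2" and t: "0 < t" "t * ky = k - kx" and k: "0 < k" and ky: "0 < ky"
    and ceq: "t\<^sup>2 * c\<^sup>2 + (c + k)\<^sup>2 = R\<^sup>2"
    and P: "0 \<le> P" "P \<le> c" and Q0: "0 \<le> Q"
  shows "Q < sqrt (R\<^sup>2 - (P+kx)\<^sup>2) - ky \<longleftrightarrow> ((P + k)\<^sup>2 + Q\<^sup>2 < R\<^sup>2 \<and> (P + kx)\<^sup>2 + (Q + ky)\<^sup>2 < R\<^sup>2)"
proof -
  have e1: "Q < sqrt (R\<^sup>2 - (P+kx)\<^sup>2) - ky \<longleftrightarrow> (Q + ky)\<^sup>2 < R\<^sup>2 - (P+kx)\<^sup>2"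
    using sqrt_gt_iff_sq[of "Q+ky" "R\<^sup>2 - (P+kx)\<^sup>2"] Q0 ky by linarith
  have e2: "(P + k)\<^sup>2 + Q\<^sup>2 < R\<^sup>2" if D2: "(Q + ky)\<^sup>2 < R\<^sup>2 - (P+kx)\<^sup>2"
  proof (cases "t*P \<le> Q")
    case True
    have "0 \<le> 2*ky*(Q - t*P)" using True ky by simp
    then show ?thesis using key_id[OF kk t(2), of P Q] D2 by linarith
  next
    case False
    then have "Q\<^sup>2 < (t*P)\<^sup>2" using Q0 by (intro power_strict_mono) auto
    moreover have "(t*P)\<^sup>2 \<le> (t*c)\<^sup>2" using P t by (intro power_mono) auto
    moreover have "(P+k)\<^sup>2 \<le> (c+k)\<^sup>2" using P k by (intro power_mono) auto
    ultimately show ?thesis using ceq by (simp add: power_mult_distrib)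
  qed
  show ?thesis using e1 e2 by linarith
qed

lemma slice_mid:
  assumes kk: "kx\<^sup>2 + ky\<^sup>2 = k\<^sup>2" and t: "0 < t" "t * ky = k - kx" and k: "0 < k" and ky: "0 < ky"
    and ceq: "t\<^sup>2 * c\<^sup>2 + (c + k)\<^sup>2 = R\<^sup>2" and c: "0 \<le> c"
    and P: "c < P" and Q0: "0 \<le> Q"
  shows "Q < sqrt (R\<^sup>2 - (P+k)\<^sup>2) \<longleftrightarrow> ((P + k)\<^sup>2 + Q\<^sup>2 < R\<^sup>2 \<and> (P + kx)\<^sup>2 + (Q + ky)\<^sup>2 < R\<^sup>2)"
proof -
  have e1: "Q < sqrt (R\<^sup>2 - (P+k)\<^sup>2) \<longleftrightarrow> Q\<^sup>2 < R\<^sup>2 - (P+k)\<^sup>2"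
    using sqrt_gt_iff_sq[of "Q" "R\<^sup>2 - (P+k)\<^sup>2"] Q0 by linarith
  have e2: "(P + kx)\<^sup>2 + (Q + ky)\<^sup>2 < R\<^sup>2" if D1: "(P + k)\<^sup>2 + Q\<^sup>2 < R\<^sup>2"
  proof (cases "Q \<le> t*P")
    case True
    have "2*ky*(Q - t*P) \<le> 0" using True ky by (simp add: mult_nonneg_nonpos)
    then show ?thesis using key_id[OF kk t(2), of P Q] D1 by linarith
  next
    case False
    then have "(t*P)\<^sup>2 < Q\<^sup>2" using P t c by (intro power_strict_mono) auto
    moreover have "(t*c)\<^sup>2 \<le> (t*P)\<^sup>2" using P c t by (intro power_mono) auto
    moreover have "(c+k)\<^sup>2 \<le> (P+k)\<^sup>2" using P c k by (intro power_mono) auto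
    ultimately show ?thesis using ceq D1 by (simp add: power_mult_distrib)
  qed
  show ?thesis using e1 e2 by linarith
qed

lemma area_Gset:
  fixes k kx ky R t c :: real
  assumes k: "0 < k" and kx: "0 \<le> kx" and ky: "0 < ky" and kk: "kx\<^sup>2 + ky\<^sup>2 = k\<^sup>2"
    and R: "k < R" and t: "0 < t" "t * ky = k - kx" and c: "0 < c" "c < R - k"
    and ceq: "t\<^sup>2 * c\<^sup>2 + (c + k)\<^sup>2 = R\<^sup>2"
  shows "measure lborel (Gset k kx ky R) =
     4 * ((Fc R (c+kx) - Fc R kx - c * ky) + (Fc R R - Fc R (c+k)))"
proof -
  define m where "m = R - k"
  define h where "h P = (if P \<le> c then sqrt (R\<^sup>2 - (P+kx)\<^sup>2) - ky else if P < m then sqrt (R\<^sup>2 - (P+k)\<^sup>2) else 0)" for P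
  have cl: "(c+kx)\<^sup>2 + (t*c+ky)\<^sup>2 = R\<^sup>2"
    using key_id[OF kk t(2), of c "t*c"] ceq by (simp add: power_mult_distrib algebra_simps)
  have Rpos: "R > 0" using k R by linarith
  have slice: "(\<bar>q\<bar> < h P) \<longleftrightarrow> ((P + k)\<^sup>2 + q\<^sup>2 < R\<^sup>2 \<and> (P + kx)\<^sup>2 + (\<bar>q\<bar> + ky)\<^sup>2 < R\<^sup>2)"
    if P: "0 \<le> P" for P q
  proof -
    have qQ: "q\<^sup>2 = \<bar>q\<bar>\<^sup>2" by simp
    show ?thesis
    proof (cases "P \<le> c")
      case True
      then show ?thesis unfolding h_def qQ using slice_lo[OF kk t k ky ceq P True, of "\<bar>q\<bar>"] by simp
    next
      case False
      show ?thesis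
      proof (cases "P < m")
        case True
        then show ?thesis unfolding h_def qQ using False slice_mid[OF kk t k ky ceq _ _, of P "\<bar>q\<bar>"] c by simp
      next
        case False2: False
        have "R\<^sup>2 \<le> (P+k)\<^sup>2" using False2 Rpos unfolding m_def by (intro power_mono) auto
        moreover have "0 \<le> q\<^sup>2" by simp
        ultimately have "\<not> ((P + k)\<^sup>2 + q\<^sup>2 < R\<^sup>2)" by linarith
        then show ?thesis using False False2 unfolding h_def by simp
      qed
    qed
  qed
  have sl: "(p,q) \<in> Gset k kx ky R \<longleftrightarrow> \<bar>q\<bar> < h \<bar>p\<bar>" for p q
    using slice[of "\<bar>p\<bar>" q] by (simp add: Gset_def)
  have h0: "0 \<le> h P" if "0 \<le> P" for P
  proof (cases "P \<le> c")
    case True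
    have "(P+kx)\<^sup>2 \<le> (c+kx)\<^sup>2" using True that kx by (intro power_mono) auto
    moreover have "ky\<^sup>2 \<le> (t*c+ky)\<^sup>2" using ky t c by (intro power_mono) auto
    ultimately have "ky\<^sup>2 \<le> R\<^sup>2 - (P+kx)\<^sup>2" using cl by linarith
    then have "sqrt (ky\<^sup>2) \<le> sqrt (R\<^sup>2 - (P+kx)\<^sup>2)" by (rule real_sqrt_le_mono)
    then show ?thesis using True ky unfolding h_def by simp
  next
    case False
    have "P < m \<Longrightarrow> (P+k)\<^sup>2 \<le> R\<^sup>2" using that k unfolding m_def by (intro power_mono) auto
    then show ?thesis using False unfolding h_def by auto
  qed
  have hm: "h P = 0" if "m \<le> P" for P
    using that c unfolding h_def m_def by auto
  have ckx: "c + kx \<le> R"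
  proof -
    have "(c+kx)\<^sup>2 \<le> R\<^sup>2" using cl by (smt (verit) zero_le_power2)
    then have "\<bar>c+kx\<bar> \<le> \<bar>R\<bar>" by (simp add: abs_le_square_iff)
    then show ?thesis using Rpos c kx by simp
  qed
  have i1: "(h has_integral (Fc R (c+kx) - Fc R (0+kx) - c * ky)) {0..c}"
  proof -
    have "((\<lambda>p. sqrt (R\<^sup>2 - (p+kx)\<^sup>2) - ky) has_integral (Fc R (c+kx) - Fc R (0+kx) - c * ky)) {0..c}"
    proof (intro has_integral_diff circ_int)
      show "((\<lambda>p. ky) has_integral c * ky) {0..c}" using has_integral_const_real[of ky 0 c] c by simp
    qed (use Rpos c kx ckx in auto)
    then show ?thesis by (rule has_integral_eq[rotated]) (auto simp: h_def)
  qed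
  have i2: "(h has_integral (Fc R (m+k) - Fc R (c+k))) {c..m}"
  proof -
    have "((\<lambda>p. sqrt (R\<^sup>2 - (p+k)\<^sup>2)) has_integral (Fc R (m+k) - Fc R (c+k))) {c..m}"
      by (intro circ_int) (use Rpos c k in \<open>auto simp: m_def\<close>)
    then show ?thesis
      by (rule has_integral_spike_finite[where S="{c,m}", rotated 2]) (auto simp: h_def intro!: power_mono)
  qed
  have "(h has_integral ((Fc R (c+kx) - Fc R (0+kx) - c * ky) + (Fc R (m+k) - Fc R (c+k)))) {0..m}"
    using has_integral_combine[OF _ _ i1 i2] c unfolding m_def by simp
  then have "measure lborel (Gset k kx ky R) = 4 * ((Fc R (c+kx) - Fc R (0+kx) - c * ky) + (Fc R (m+k) - Fc R (c+k)))"
    by (intro measure_sym_slices(2)[OF borel_open[OF Gset_open] sl h0 hm]) (use c in \<open>auto simp: m_def\<close>)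
  then show ?thesis using c by (simp add: m_def)
qed


lemma arctan_diff:
  fixes x y :: real
  assumes "0 \<le> x" "0 \<le> y"
  shows "arctan x - arctan y = arctan ((x - y) / (1 + x * y))"
proof -
  define d where "d = arctan x - arctan y"
  have b: "- (pi/2) < d" "d < pi/2"
    using arctan_bounded[of x] arctan_bounded[of y] assms unfolding d_def
    by (auto simp del: zero_le_arctan_iff intro: order.trans)
       (use zero_le_arctan_iff[of x] zero_le_arctan_iff[of y] in linarith)+
  have "cos d \<noteq> 0" using b by (intro less_imp_neq[symmetric] cos_gt_zero_pi) auto
  then have "tan d = (x - y) / (1 + x * y)"
    unfolding d_def by (subst tan_diff) (auto simp: tan_arctan d_def)
  then have "arctan ((x - y) / (1 + x * y)) = d" using arctan_tan[OF b] by simp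
  then show ?thesis unfolding d_def by simp
qed

lemma arctan_sqrt3: "arctan (sqrt 3) = pi/3"
proof (rule arctan_unique)
  show "- (pi / 2) < pi / 3" using pi_gt_zero by linarith
qed (use pi_gt_zero in \<open>auto simp: tan_60\<close>)

lemma arctan_inv_sqrt3: "arctan (1 / sqrt 3) = pi/6"
  by (rule arctan_unique) (use pi_gt_zero in \<open>auto simp: tan_30\<close>)

lemma arctan_recip_pos: "0 < x \<Longrightarrow> arctan (1/x) = pi/2 - arctan x"
  using arctan_inverse[of x] by (simp add: inverse_eq_divide)

lemma Fc_alt:
  assumes R: "R > 0" and v: "v > 0" and uv: "u\<^sup>2 + v\<^sup>2 = R\<^sup>2"
  shows "Fc R u = (u * v + R\<^sup>2 * arctan (u / v)) / 2"
proof -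
  have "R\<^sup>2 - u\<^sup>2 = v\<^sup>2" using uv by simp
  then have sv: "sqrt (R\<^sup>2 - u\<^sup>2) = v" using v by simp
  have "v\<^sup>2 > 0" using v by simp
  then have "u\<^sup>2 < R\<^sup>2" using uv by linarith
  then have "\<bar>u\<bar> < R" using R by (metis abs_of_pos power2_abs power_less_imp_less_base abs_ge_zero)
  then have u1: "-1 < u/R" "u/R < 1" using R by (auto simp: field_simps abs_less_iff)
  have "sqrt (1 - (u/R)\<^sup>2) = v / R"
  proof -
    have "1 - (u/R)\<^sup>2 = (v/R)\<^sup>2" using uv R by (simp add: field_simps)
    then show ?thesis using v R by simp
  qed
  then have "arcsin (u/R) = arctan (u / v)" using arcsin_arctan[OF u1] R v by (simp add: field_simps)
  then show ?thesis unfolding Fc_def sv by simp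
qed

lemma Fc_R: "R > 0 \<Longrightarrow> Fc R R = R\<^sup>2 * pi / 4"
  unfolding Fc_def by simp

lemma Fc_0: "Fc R 0 = 0"
  unfolding Fc_def by simp


definition fsq :: "real \<Rightarrow> real" where
  "fsq \<rho> = (4 * \<rho>\<^sup>2 * arctan ((sqrt (2*\<rho>\<^sup>2 - 1) - 1) / (sqrt (2*\<rho>\<^sup>2 - 1) + 1))
               - 2 * sqrt (2*\<rho>\<^sup>2 - 1) + 2) / (\<rho>\<^sup>2 - 1)\<^sup>2"

lemma square_area:
  fixes a \<rho> :: real
  assumes a: "a > 0" and \<rho>: "\<rho> > 1"
  defines "k \<equiv> a / (\<rho>\<^sup>2 - 1)"
  shows "measure lborel (Gset k 0 k (\<rho> * k)) = a\<^sup>2 * fsq \<rho>"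
    "measure lborel (Gset k 0 k (\<rho> * k)) < 4 * (\<rho> * k - k)\<^sup>2"
proof -
  define s where "s = sqrt (2*\<rho>\<^sup>2 - 1)"
  define R where "R = \<rho> * k"
  define c where "c = k * (s - 1) / 2"
  have r1: "\<rho>\<^sup>2 > 1" using \<rho> by (metis one_less_power zero_less_numeral pos2)
  have k: "k > 0" unfolding k_def using a r1 by simp
  have s2: "s\<^sup>2 = 2*\<rho>\<^sup>2 - 1" unfolding s_def using r1 by simp
  have s1: "s > 1" unfolding s_def using r1 by (simp add: real_less_rsqrt)
  have R: "k < R" unfolding R_def using k \<rho> by simp
  have c0: "0 < c" unfolding c_def using k s1 by simp
  have sq: "(2*\<rho> - 1)\<^sup>2 - s\<^sup>2 = 2 * (\<rho> - 1)\<^sup>2" using s2 by (simp add: power2_eq_square algebra_simps)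
  have s_lt: "s < 2*\<rho> - 1"
  proof -
    have "(\<rho> - 1)\<^sup>2 > 0" using \<rho> by simp
    then have "s\<^sup>2 < (2*\<rho> - 1)\<^sup>2" using sq by linarith
    then show ?thesis by (rule power2_less_imp_less) (use \<rho> in auto)
  qed
  have cm: "c < R - k"
  proof -
    from s_lt have "k * (s - 1) < k * (2*\<rho> - 2)" using k by (intro mult_strict_left_mono) auto
    then have "k*(s-1)/2 < k*(2*\<rho>-2)/2" by simp
    moreover have "k*(2*\<rho>-2)/2 = \<rho>*k - k" by (simp add: field_simps)
    ultimately show ?thesis unfolding c_def R_def by simp
  qed
  have ceq: "1\<^sup>2 * c\<^sup>2 + (c + k)\<^sup>2 = R\<^sup>2"
  proof -
    have "1\<^sup>2 * c\<^sup>2 + (c + k)\<^sup>2 = k\<^sup>2 * (s\<^sup>2 + 1) / 2"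
      unfolding c_def by (simp add: power2_eq_square field_simps)
    also have "\<dots> = R\<^sup>2" unfolding s2 R_def by (simp add: power_mult_distrib)
    finally show ?thesis .
  qed
  have area: "measure lborel (Gset k 0 k R) = 4 * ((Fc R (c+0) - Fc R 0 - c * k) + (Fc R R - Fc R (c+k)))"
    by (rule area_Gset[where t=1]) (use k R c0 cm ceq in simp_all)
  have Rp: "R > 0" using R k by simp
  define \<theta> where "\<theta> = arctan (c / (c+k))"
  have F1: "Fc R c = (c * (c+k) + R\<^sup>2 * \<theta>) / 2"
    unfolding \<theta>_def by (rule Fc_alt) (use Rp c0 k ceq in simp_all)
  have F2: "Fc R (c+k) = ((c+k) * c + R\<^sup>2 * arctan ((c+k)/c)) / 2"
    by (rule Fc_alt) (use Rp c0 k ceq in \<open>simp_all add: add.commute\<close>)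
  have at: "arctan ((c+k)/c) = pi/2 - \<theta>"
    unfolding \<theta>_def using arctan_recip_pos[of "c/(c+k)"] c0 k by simp
  have A: "measure lborel (Gset k 0 k R) = 4 * (R\<^sup>2 * \<theta> - c * k)"
    unfolding area add_0_right F1 F2 at Fc_0 Fc_R[OF Rp] by (simp add: field_simps)
  have th: "\<theta> = arctan ((s - 1) / (s + 1))"
  proof -
    have ck: "c + k = k*(s+1)/2" unfolding c_def by (simp add: field_simps)
    have "s + 1 \<noteq> 0" "k \<noteq> 0" using s1 k by auto
    then have "c / (c+k) = (s-1)/(s+1)" unfolding ck unfolding c_def by (simp add: divide_simps)
    then show ?thesis unfolding \<theta>_def by simp
  qed
  have ak: "a = k * (\<rho>\<^sup>2 - 1)" unfolding k_def using r1 by simp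
  have "a\<^sup>2 * fsq \<rho> = k\<^sup>2 * (4 * \<rho>\<^sup>2 * \<theta> - 2 * s + 2)"
    unfolding fsq_def s_def[symmetric] th[symmetric] ak using r1 by (simp add: power_mult_distrib)
  also have "\<dots> = 4 * (R\<^sup>2 * \<theta> - c * k)"
    unfolding R_def c_def by (simp add: power_mult_distrib field_simps power2_eq_square)
  finally show "measure lborel (Gset k 0 k (\<rho> * k)) = a\<^sup>2 * fsq \<rho>"
    using A unfolding R_def by simp
  have "\<theta> \<le> c / (c+k)" unfolding \<theta>_def by (rule arctan_le_self) (use c0 k in simp)
  then have "R\<^sup>2 * \<theta> \<le> R\<^sup>2 * (c / (c+k))" by (rule mult_left_mono) simp_all
  moreover have "R\<^sup>2 * (c / (c+k)) - c * k < (R - k)\<^sup>2"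
  proof -
    have ck: "c + k = k*(s+1)/2" unfolding c_def by (simp add: field_simps)
    have ne: "s + 1 \<noteq> 0" "k \<noteq> 0" using s1 k by auto
    then have cx: "c / (c+k) = (s-1)/(s+1)" unfolding ck unfolding c_def by (simp add: divide_simps)
    have "(R - k)\<^sup>2 - (R\<^sup>2 * (c / (c+k)) - c * k) = k\<^sup>2 * (2*\<rho> - s - 1)\<^sup>2 / (2 * (s+1))"
      unfolding cx unfolding R_def c_def using ne
      by (simp add: divide_simps power2_eq_square) (simp add: algebra_simps)
    moreover have "2*\<rho> - s - 1 \<noteq> 0" using s_lt by linarith
    ultimately show ?thesis using k s1 by (smt (verit) divide_pos_pos zero_less_power2 mult_pos_pos)
  qed
  ultimately have "R\<^sup>2 * \<theta> - c * k < (R - k)\<^sup>2" by linarith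
  then show "measure lborel (Gset k 0 k (\<rho> * k)) < 4 * (\<rho> * k - k)\<^sup>2"
    using A unfolding R_def by simp
qed


lemma ideal_eq:
  fixes P Q A B q r \<rho> :: real
  assumes "P - Q = (q\<^sup>2 - 3) * A + (r\<^sup>2 - 4*\<rho>\<^sup>2 + 1) * B" "q\<^sup>2 = 3" "r\<^sup>2 = 4*\<rho>\<^sup>2 - 1"
  shows "P = Q"
  using assms by simp

definition ftr :: "real \<Rightarrow> real" where
  "ftr \<rho> = (4 * sqrt 3 * \<rho>\<^sup>2 * arctan ((sqrt (4*\<rho>\<^sup>2 - 1) - sqrt 3) / (sqrt 3 * sqrt (4*\<rho>\<^sup>2 - 1) + 1))
               - sqrt 3 * sqrt (4*\<rho>\<^sup>2 - 1) + 3) / (\<rho>\<^sup>2 - 1)\<^sup>2"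

lemma tri_area:
  fixes a \<rho> :: real
  assumes a: "a > 0" and \<rho>: "\<rho> > 1"
  defines "k \<equiv> a / (\<rho>\<^sup>2 - 1)"
  shows "measure lborel (Gset k (k/2) (k * sqrt 3 / 2) (\<rho> * k)) = a * (a * sqrt 3 / 2) * ftr \<rho>"
    "measure lborel (Gset k (k/2) (k * sqrt 3 / 2) (\<rho> * k)) < 2 * sqrt 3 * (\<rho> * k - k)\<^sup>2"
proof -
  define q where "q = sqrt 3"
  define r where "r = sqrt (4*\<rho>\<^sup>2 - 1)"
  define R where "R = \<rho> * k"
  define c where "c = k * (q*r - 3) / 4"
  have r1: "\<rho>\<^sup>2 > 1" using \<rho> by (metis one_less_power zero_less_numeral pos2)
  have k: "k > 0" unfolding k_def using a r1 by simp
  have q2: "q\<^sup>2 = 3" and q0: "q > 0" unfolding q_def by auto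
  have r2: "r\<^sup>2 = 4*\<rho>\<^sup>2 - 1" and r0: "r > 0" unfolding r_def using r1 by auto
  have rq: "q < r"
  proof -
    have "q\<^sup>2 < r\<^sup>2" using q2 r2 r1 by simp
    then show ?thesis by (rule power2_less_imp_less) (use r0 in simp)
  qed
  have qr3: "q * r > 3"
  proof -
    have "q * q < q * r" using rq q0 by simp
    then show ?thesis using q2 by (simp add: power2_eq_square)
  qed
  have qr_lt: "q * r < 4*\<rho> - 1"
  proof -
    have "(4*\<rho> - 1)\<^sup>2 - (q*r)\<^sup>2 = 4 * (\<rho> - 1)\<^sup>2"
      by (rule ideal_eq[where A="- r\<^sup>2" and B="- 3" and q=q and r=r and \<rho>=\<rho>], algebra, rule q2, rule r2)
    moreover have "(\<rho> - 1)\<^sup>2 > 0" using \<rho> by simp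
    ultimately have "(q*r)\<^sup>2 < (4*\<rho> - 1)\<^sup>2" by linarith
    then show ?thesis by (rule power2_less_imp_less) (use \<rho> in simp)
  qed
  have R: "k < R" unfolding R_def using k \<rho> by simp
  have Rp: "R > 0" using R k by simp
  have c0: "0 < c" unfolding c_def using k qr3 by simp
  have cm: "c < R - k"
  proof -
    have "k * (q*r - 3) < k * (4*\<rho> - 4)" using k qr_lt by (intro mult_strict_left_mono) auto
    then have "k*(q*r-3)/4 < k*(4*\<rho>-4)/4" by simp
    moreover have "k*(4*\<rho>-4)/4 = \<rho>*k - k" by (simp add: field_simps)
    ultimately show ?thesis unfolding c_def R_def by simp
  qed
  have kk: "(k/2)\<^sup>2 + (k * q / 2)\<^sup>2 = k\<^sup>2"
    using q2 by (simp add: power_mult_distrib power_divide field_simps)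
  have tt: "(1/q) * (k * q / 2) = k - k/2" using q0 by (simp add: field_simps)
  have ceq: "(1/q)\<^sup>2 * c\<^sup>2 + (c + k)\<^sup>2 = R\<^sup>2"
  proof -
    have "(k*(q*r-3))\<^sup>2 + 3 * (k*(q*r-3) + 4*k)\<^sup>2 = 48 * (\<rho>*k)\<^sup>2"
      by (rule ideal_eq[where A="4*r\<^sup>2*k\<^sup>2" and B="12*k\<^sup>2" and q=q and r=r and \<rho>=\<rho>], algebra, rule q2, rule r2)
    then show ?thesis unfolding c_def R_def using q2 q0
      by (simp add: power_divide power_mult_distrib field_simps)
  qed
  have area: "measure lborel (Gset k (k/2) (k * q / 2) R) =
      4 * ((Fc R (c + k/2) - Fc R (k/2) - c * (k * q / 2)) + (Fc R R - Fc R (c+k)))"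
    by (rule area_Gset[where t="1/q"]) (use k R c0 cm ceq q0 kk tt in simp_all)
  define u1 where "u1 = k*(q*r-1)/4"
  define v1 where "v1 = k*(r+q)/4"
  define v0 where "v0 = k*r/2"
  define u2 where "u2 = k*(q*r+1)/4"
  define v2 where "v2 = k*(r-q)/4"
  have cu1: "c + k/2 = u1" unfolding c_def u1_def by (simp add: field_simps)
  have cu2: "c + k = u2" unfolding c_def u2_def by (simp add: field_simps)
  have v1p: "v1 > 0" unfolding v1_def using k r0 q0 by simp
  have v0p: "v0 > 0" unfolding v0_def using k r0 by simp
  have v2p: "v2 > 0" unfolding v2_def using k rq by simp
  have e1: "u1\<^sup>2 + v1\<^sup>2 = R\<^sup>2"
  proof -
    have "(k*(q*r-1))\<^sup>2 + (k*(r+q))\<^sup>2 = 16*(\<rho>*k)\<^sup>2"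
      by (rule ideal_eq[where A="k\<^sup>2 + r\<^sup>2*k\<^sup>2" and B="4*k\<^sup>2" and q=q and r=r and \<rho>=\<rho>], algebra, rule q2, rule r2)
    then show ?thesis unfolding u1_def v1_def R_def by (simp add: power_divide power_mult_distrib field_simps)
  qed
  have e0: "(k/2)\<^sup>2 + v0\<^sup>2 = R\<^sup>2"
  proof -
    have "k\<^sup>2 + (k*r)\<^sup>2 = 4*(\<rho>*k)\<^sup>2"
      by (rule ideal_eq[where A="0" and B="k\<^sup>2" and q=q and r=r and \<rho>=\<rho>], algebra, rule q2, rule r2)
    then show ?thesis unfolding v0_def R_def by (simp add: power_divide power_mult_distrib field_simps)
  qed
  have e2: "u2\<^sup>2 + v2\<^sup>2 = R\<^sup>2"
  proof -
    have "(k*(q*r+1))\<^sup>2 + (k*(r-q))\<^sup>2 = 16*(\<rho>*k)\<^sup>2"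
      by (rule ideal_eq[where A="k\<^sup>2 + r\<^sup>2*k\<^sup>2" and B="4*k\<^sup>2" and q=q and r=r and \<rho>=\<rho>], algebra, rule q2, rule r2)
    then show ?thesis unfolding u2_def v2_def R_def by (simp add: power_divide power_mult_distrib field_simps)
  qed
  define T where "T = arctan r"
  define X where "X = arctan ((r - q) / (q*r + 1))"
  have a1: "arctan (u1/v1) = T - pi/6"
  proof -
    have n1: "r + q \<noteq> 0" "k \<noteq> 0" "q \<noteq> 0" "q + r \<noteq> 0" using k q0 r0 by auto
    have "u1/v1 = (q*r-1)/(r+q)" unfolding u1_def v1_def using n1 by (simp add: divide_simps)
    moreover have "(r - 1/q) / (1 + r * (1/q)) = (q*r-1)/(r+q)"
    proof -
      have "(r - 1/q) / (1 + r * (1/q)) = ((r - 1/q) * q) / ((1 + r * (1/q)) * q)" using n1 by simp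
      also have "\<dots> = (q*r-1)/(r+q)" using n1 by (simp add: algebra_simps)
      finally show ?thesis .
    qed
    ultimately have "u1/v1 = (r - 1/q) / (1 + r * (1/q))" by simp
    then show ?thesis unfolding T_def using arctan_diff[of r "1/q"] r0 q0 arctan_inv_sqrt3
      unfolding q_def by simp
  qed
  have a0: "arctan ((k/2)/v0) = pi/2 - T"
  proof -
    have "(k/2)/v0 = 1/r" unfolding v0_def using k r0 by (simp add: field_simps)
    then show ?thesis unfolding T_def using arctan_recip_pos[OF r0] by simp
  qed
  have aX: "X = T - pi/3"
  proof -
    have "arctan r - arctan q = arctan ((r-q)/(1+r*q))" by (rule arctan_diff) (use r0 q0 in auto)
    moreover have "arctan q = pi/3" unfolding q_def by (rule arctan_sqrt3)
    moreover have e: "q*r+1 = 1+r*q" by (simp add: algebra_simps)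
    ultimately show ?thesis unfolding X_def T_def e by simp
  qed
  have a2: "arctan (u2/v2) = pi/2 - X"
  proof -
    have "q*r + 1 > 0" using q0 r0 by (simp add: add_pos_pos)
    then have xp: "(r - q) / (q*r + 1) > 0" using rq by (intro divide_pos_pos) auto
    have "u2/v2 = 1 / ((r - q) / (q*r + 1))"
      unfolding u2_def v2_def using k rq by (simp add: field_simps)
    then show ?thesis unfolding X_def using arctan_recip_pos[OF xp] by simp
  qed
  have F1: "Fc R (c + k/2) = (u1 * v1 + R\<^sup>2 * (T - pi/6)) / 2"
    unfolding cu1 a1[symmetric] by (rule Fc_alt[OF Rp v1p e1])
  have F0: "Fc R (k/2) = ((k/2) * v0 + R\<^sup>2 * (pi/2 - T)) / 2"
    unfolding a0[symmetric] by (rule Fc_alt[OF Rp v0p e0])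
  have F2: "Fc R (c + k) = (u2 * v2 + R\<^sup>2 * (pi/2 - X)) / 2"
    unfolding cu2 a2[symmetric] by (rule Fc_alt[OF Rp v2p e2])
  have alg: "4 * (u1 * v1/2 - (k/2) * v0/2 - c*(k*q/2) - u2 * v2/2) = k\<^sup>2*(3*q - 3*r)/2"
  proof -
    have "4 * (u1 * v1/2 - (k/2) * v0/2 - c*(k*q/2) - u2 * v2/2) =
      (2*(k*(q*r-1))*(k*(r+q)) - 8*k*(k*r) - 8*(k*(q*r-3))*(k*q) - 2*(k*(q*r+1))*(k*(r-q)))/16"
      unfolding u1_def v1_def v0_def c_def u2_def v2_def by (simp add: field_simps)
    also have "2*(k*(q*r-1))*(k*(r+q)) - 8*k*(k*r) - 8*(k*(q*r-3))*(k*q) - 2*(k*(q*r+1))*(k*(r-q))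
        = 24*k\<^sup>2*q - 24*k\<^sup>2*r"
      by (rule ideal_eq[where A="- 4*r*k\<^sup>2" and B="0" and q=q and r=r and \<rho>=\<rho>], algebra, rule q2, rule r2)
    finally show ?thesis by (auto simp: field_simps right_diff_distrib)
  qed
  have A: "measure lborel (Gset k (k/2) (k * q / 2) R) = 6 * R\<^sup>2 * X + k\<^sup>2*(3*q - 3*r)/2"
  proof -
    have "measure lborel (Gset k (k/2) (k * q / 2) R) =
       4 * (u1 * v1/2 - (k/2) * v0/2 - c*(k*q/2) - u2 * v2/2) + R\<^sup>2 * (4*T - 2*X - 4*pi/3) + 4 * R\<^sup>2 * X"
      unfolding area F1 F0 F2 Fc_R[OF Rp] by (simp add: field_simps)
    also have "\<dots> = 6 * R\<^sup>2 * X + k\<^sup>2*(3*q - 3*r)/2"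
    proof -
      have "T = X + pi/3" using aX by simp
      then show ?thesis unfolding alg by (simp add: algebra_simps)
    qed
    finally show ?thesis .
  qed
  have ak: "a = k * (\<rho>\<^sup>2 - 1)" unfolding k_def using r1 by simp
  have N: "ftr \<rho> = (4*q*\<rho>\<^sup>2*X - q*r + 3)/(\<rho>\<^sup>2-1)\<^sup>2"
    unfolding ftr_def X_def q_def r_def by simp
  have aa: "a * (a * q / 2) = k\<^sup>2 * (q/2) * (\<rho>\<^sup>2-1)\<^sup>2" unfolding ak by (simp add: power2_eq_square)
  have nz: "(\<rho>\<^sup>2-1)\<^sup>2 \<noteq> 0" using r1 by simp
  have "a * (a * q / 2) * ftr \<rho> = k\<^sup>2 * (q/2) * (4*q*\<rho>\<^sup>2*X - q*r + 3)"
    unfolding aa N using nz by simp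
  also have "\<dots> = 6 * R\<^sup>2 * X + k\<^sup>2*(3*q - 3*r)/2"
  proof -
    have q3: "q * (q * z) = 3 * z" for z using q2 by (simp add: power2_eq_square mult.assoc[symmetric])
    show ?thesis unfolding R_def by (simp add: power_mult_distrib field_simps power2_eq_square q3)
  qed
  finally show "measure lborel (Gset k (k/2) (k * sqrt 3 / 2) (\<rho> * k)) = a * (a * sqrt 3 / 2) * ftr \<rho>"
    using A unfolding R_def q_def by simp
  define x where "x = (r - q) / (q*r + 1)"
  have "X \<le> x" unfolding X_def x_def by (rule arctan_le_self) (use rq q0 r0 in simp)
  then have "(6 * R\<^sup>2) * X \<le> (6 * R\<^sup>2) * x" by (rule mult_left_mono) simp
  moreover have "6 * R\<^sup>2 * x + k\<^sup>2*(3*q - 3*r)/2 < 2 * q * (R - k)\<^sup>2"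
  proof -
    have d: "q*r + 1 > 0" using q0 r0 by (simp add: add_pos_pos)
    have id: "4*q*(\<rho>-1)\<^sup>2*(q*r+1) - 12*\<rho>\<^sup>2*(r-q) + (3*r-3*q)*(q*r+1) = q*(4*\<rho>-(q*r+1))\<^sup>2"
      by (rule ideal_eq[where A="- r + 4*r*\<rho>\<^sup>2 - q*r\<^sup>2" and B="0" and q=q and r=r and \<rho>=\<rho>], algebra, rule q2, rule r2)
    have "4*\<rho> - (q*r+1) \<noteq> 0" using qr_lt by linarith
    then have pos: "q*(4*\<rho>-(q*r+1))\<^sup>2 > 0" using q0 by simp
    have "(2 * q * (R - k)\<^sup>2 - (6 * R\<^sup>2 * x + k\<^sup>2*(3*q - 3*r)/2)) * (2*(q*r+1)) =
        k\<^sup>2 * (4*q*(\<rho>-1)\<^sup>2*(q*r+1) - 12*\<rho>\<^sup>2*(r-q) + (3*r-3*q)*(q*r+1))"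
      unfolding R_def x_def using d by (simp add: field_simps power2_eq_square)
    also have "\<dots> > 0" unfolding id using pos k by simp
    finally show ?thesis using d by (simp add: zero_less_mult_iff)
  qed
  ultimately have "measure lborel (Gset k (k/2) (k * q / 2) R) < 2 * q * (R - k)\<^sup>2"
    unfolding A by linarith
  then show "measure lborel (Gset k (k/2) (k * sqrt 3 / 2) (\<rho> * k)) < 2 * sqrt 3 * (\<rho> * k - k)\<^sup>2"
    unfolding R_def q_def by simp
qed


definition lat :: "real \<Rightarrow> real \<Rightarrow> real \<Rightarrow> (real \<times> real) set" where
  "lat a b s = {(a * (of_int i + of_int j * s), b * of_int j) | i j :: int. True}"

lemma lat_memI: "(a * (of_int i + of_int j * s), b * of_int j) \<in> lat a b s"
  unfolding lat_def by blast

lemma lat_memE: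
  assumes "x \<in> lat a b s"
  obtains i j :: int where "x = (a * (of_int i + of_int j * s), b * of_int j)"
  using assms unfolding lat_def by blast

lemma lat_diff: "x \<in> lat a b s \<Longrightarrow> y \<in> lat a b s \<Longrightarrow> x - y \<in> lat a b s"
proof -
  assume "x \<in> lat a b s" "y \<in> lat a b s"
  then obtain i j i' j' where x: "x = (a * (of_int i + of_int j * s), b * of_int j)"
     and y: "y = (a * (of_int i' + of_int j' * s), b * of_int j')" by (metis lat_memE)
  have e: "x - y = (a * (of_int (i - i') + of_int (j - j') * s), b * of_int (j - j'))"
    unfolding x y by (simp add: algebra_simps)
  show ?thesis unfolding e by (rule lat_memI)
qed

lemma lat_add: "x \<in> lat a b s \<Longrightarrow> y \<in> lat a b s \<Longrightarrow> x + y \<in> lat a b s"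
proof -
  assume "x \<in> lat a b s" "y \<in> lat a b s"
  then obtain i j i' j' where x: "x = (a * (of_int i + of_int j * s), b * of_int j)"
     and y: "y = (a * (of_int i' + of_int j' * s), b * of_int j')" by (metis lat_memE)
  have e: "x + y = (a * (of_int (i + i') + of_int (j + j') * s), b * of_int (j + j'))"
    unfolding x y by (simp add: algebra_simps)
  show ?thesis unfolding e by (rule lat_memI)
qed

lemma lat_zero: "0 \<in> lat a b s"
  using lat_memI[of a 0 0 s b] by (simp add: zero_prod_def)

definition rect :: "real \<Rightarrow> real \<Rightarrow> real \<times> real \<Rightarrow> (real \<times> real) set" where
  "rect a b x = {fst x <..< fst x + a} \<times> {snd x <..< snd x + b}"

definition crect :: "real \<Rightarrow> real \<Rightarrow> real \<times> real \<Rightarrow> (real \<times> real) set" where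
  "crect a b x = {fst x .. fst x + a} \<times> {snd x .. snd x + b}"

lemma emeasure_Times_lborel:
  fixes A B :: "real set"
  assumes "A \<in> sets borel" "B \<in> sets borel"
  shows "emeasure lborel (A \<times> B) = emeasure lborel A * emeasure lborel B"
proof -
  have "emeasure lborel (A \<times> B) = emeasure (lborel \<Otimes>\<^sub>M lborel) (A \<times> B)" by (simp add: lborel_prod)
  also have "\<dots> = emeasure lborel A * emeasure lborel B"
    using assms by (intro lborel.emeasure_pair_measure_Times) auto
  finally show ?thesis .
qed

lemma measure_rect: "0 \<le> a \<Longrightarrow> 0 \<le> b \<Longrightarrow> measure lborel (rect a b x) = a * b"
  unfolding rect_def measure_def by (subst emeasure_Times_lborel) (auto simp: ennreal_mult[symmetric])

lemma measure_crect: "0 \<le> a \<Longrightarrow> 0 \<le> b \<Longrightarrow> measure lborel (crect a b x) = a * b"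
  unfolding crect_def measure_def by (subst emeasure_Times_lborel) (auto simp: ennreal_mult[symmetric])

lemma rect_open: "open (rect a b x)"
  unfolding rect_def by (intro open_Times) auto

lemma crect_closed: "closed (crect a b x)"
  unfolding crect_def by (intro closed_Times) auto

lemma rect_lat_index:
  assumes a: "a > 0" and b: "b > 0" and z: "z \<in> rect a b (a * (of_int i + of_int j * s), b * of_int j)"
  shows "j = \<lfloor>snd z / b\<rfloor>" "i = \<lfloor>fst z / a - of_int j * s\<rfloor>"
proof -
  from z have z2: "b * of_int j < snd z" "snd z < b * of_int j + b" and
    z1: "a * (of_int i + of_int j * s) < fst z" "fst z < a * (of_int i + of_int j * s) + a"
    unfolding rect_def by auto
  have "of_int j < snd z / b" "snd z / b < of_int j + 1" using z2 b by (auto simp: field_simps)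
  then show "j = \<lfloor>snd z / b\<rfloor>" by (intro floor_unique[symmetric]) auto
  have "of_int i < fst z / a - of_int j * s" "fst z / a - of_int j * s < of_int i + 1"
    using z1 a by (auto simp: field_simps)
  then show "i = \<lfloor>fst z / a - of_int j * s\<rfloor>" by (intro floor_unique[symmetric]) auto
qed

lemma rect_disjoint:
  assumes a: "a > 0" and b: "b > 0" and x: "x \<in> lat a b s" and y: "y \<in> lat a b s" and xy: "x \<noteq> y"
  shows "rect a b x \<inter> rect a b y = {}"
proof (rule ccontr)
  assume "rect a b x \<inter> rect a b y \<noteq> {}"
  then obtain z where zx: "z \<in> rect a b x" and zy: "z \<in> rect a b y" by blast
  obtain i j where xe: "x = (a * (of_int i + of_int j * s), b * of_int j)" using x by (metis lat_memE)
  obtain i' j' where ye: "y = (a * (of_int i' + of_int j' * s), b * of_int j')" using y by (metis lat_memE)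
  have "j = j'" using rect_lat_index[OF a b, of z i j s] rect_lat_index[OF a b, of z i' j' s] zx zy xe ye by simp
  moreover have "i = i'" using rect_lat_index[OF a b, of z i j s] rect_lat_index[OF a b, of z i' j' s] zx zy xe ye
    by (simp add: \<open>j = j'\<close>)
  ultimately show False using xy xe ye by simp
qed

lemma lat_cover:
  assumes a: "a > 0" and b: "b > 0"
  obtains x where "x \<in> lat a b s" "y \<in> crect a b x" "norm (y - x) \<le> a + b"
proof -
  define j where "j = \<lfloor>snd y / b\<rfloor>"
  define i where "i = \<lfloor>fst y / a - of_int j * s\<rfloor>"
  define x where "x = (a * (of_int i + of_int j * s), b * of_int j)"
  have j1: "of_int j \<le> snd y / b" "snd y / b < of_int j + 1" unfolding j_def by linarith+
  have i1: "of_int i \<le> fst y / a - of_int j * s" "fst y / a - of_int j * s < of_int i + 1"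
    unfolding i_def by linarith+
  have s2: "b * of_int j \<le> snd y" "snd y \<le> b * of_int j + b" using j1 b by (auto simp: field_simps)
  have s1: "a * (of_int i + of_int j * s) \<le> fst y" "fst y \<le> a * (of_int i + of_int j * s) + a"
    using i1 a by (auto simp: field_simps)
  have xl: "x \<in> lat a b s" unfolding x_def by (rule lat_memI)
  have yc: "y \<in> crect a b x" unfolding crect_def x_def using s1 s2 by (auto simp: mem_Times_iff)
  have "norm (y - x) \<le> norm (fst (y - x)) + norm (snd (y - x))"
    using norm_Pair_le[of "fst (y-x)" "snd (y-x)"] unfolding prod.collapse .
  also have "\<dots> \<le> a + b" unfolding x_def using s1 s2 by (simp add: abs_le_iff)
  finally show ?thesis using that xl yc by blast
qed


lemma measure_cball_2: "0 \<le> r \<Longrightarrow> measure lborel (cball (c::real\<times>real) r) = pi * r\<^sup>2"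
  by (simp add: content_cball unit_ball_vol_2 power2_eq_square)

lemma measure_ball_2: "0 \<le> r \<Longrightarrow> measure lborel (ball (c::real\<times>real) r) = pi * r\<^sup>2"
  by (simp add: content_ball unit_ball_vol_2 power2_eq_square)

lemma bounded_fmeasurable: "bounded (S :: (real\<times>real) set) \<Longrightarrow> S \<in> sets borel \<Longrightarrow> S \<in> fmeasurable lborel"
  by (intro fmeasurableI emeasure_bounded_finite) auto

lemma lat_finite:
  assumes a: "a > 0" and b: "b > 0"
  shows "finite (lat a b s \<inter> cball 0 t)"
proof -
  define M where "M = \<lceil>t/a + \<bar>s\<bar> * (t/b) + t/b\<rceil>"
  have "lat a b s \<inter> cball 0 t \<subseteq> (\<lambda>(i,j). (a * (of_int i + of_int j * s), b * of_int j)) ` ({-M..M} \<times> {-M..M})"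
  proof
    fix x assume x: "x \<in> lat a b s \<inter> cball 0 t"
    then obtain i j where xe: "x = (a * (of_int i + of_int j * s), b * of_int j)" by (metis IntD1 lat_memE)
    have nx: "norm x \<le> t" using x by auto
    have "\<bar>b * of_int j\<bar> \<le> t" using norm_snd_le[of "b * of_int j" "a * (of_int i + of_int j * s)"] nx xe by simp
    then have "b * \<bar>of_int j\<bar> \<le> t" using b by (metis abs_mult abs_of_pos)
    then have jb: "\<bar>of_int j\<bar> \<le> t / b" using b by (simp add: pos_le_divide_eq mult.commute)
    have "\<bar>a * (of_int i + of_int j * s)\<bar> \<le> t" using norm_fst_le[of "a * (of_int i + of_int j * s)" "b * of_int j"] nx xe by simp
    then have "a * \<bar>of_int i + of_int j * s\<bar> \<le> t" using a by (metis abs_mult abs_of_pos)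
    then have "\<bar>of_int i + of_int j * s\<bar> \<le> t / a" using a by (simp add: pos_le_divide_eq mult.commute)
    moreover have "\<bar>of_int j * s\<bar> \<le> t / b * \<bar>s\<bar>" unfolding abs_mult by (rule mult_right_mono[OF jb]) simp
    ultimately have ib: "\<bar>real_of_int i\<bar> \<le> t/a + \<bar>s\<bar> * (t/b)" by (simp add: abs_le_iff mult.commute)
    have t0: "0 \<le> t / b" using jb by linarith
    have "0 \<le> \<bar>s\<bar> * (t/b)" using t0 by (intro mult_nonneg_nonneg) auto
    then have "\<bar>real_of_int j\<bar> \<le> t/a + \<bar>s\<bar> * (t/b) + t/b" using jb ib by linarith
    moreover have "t/a + \<bar>s\<bar> * (t/b) + t/b \<le> of_int M" unfolding M_def by (rule le_of_int_ceiling)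
    ultimately have "of_int \<bar>j\<bar> \<le> (of_int M :: real)" by simp
    then have "\<bar>j\<bar> \<le> M" by linarith
    moreover have "of_int \<bar>i\<bar> \<le> (of_int M :: real)"
      using ib t0 \<open>t/a + \<bar>s\<bar> * (t/b) + t/b \<le> of_int M\<close> by simp
    then have "\<bar>i\<bar> \<le> M" by linarith
    ultimately show "x \<in> (\<lambda>(i,j). (a * (of_int i + of_int j * s), b * of_int j)) ` ({-M..M} \<times> {-M..M})"
      unfolding xe by (intro image_eqI[where x="(i,j)"]) (auto simp: abs_le_iff)
  qed
  then show ?thesis by (rule finite_subset) auto
qed

lemma rect_norm: "z \<in> rect a b x \<Longrightarrow> 0 \<le> a \<Longrightarrow> 0 \<le> b \<Longrightarrow> norm (z - x) \<le> a + b"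
proof -
  assume z: "z \<in> rect a b x" and "0 \<le> a" "0 \<le> b"
  have "norm (z - x) \<le> norm (fst (z - x)) + norm (snd (z - x))"
    using norm_Pair_le[of "fst (z-x)" "snd (z-x)"] unfolding prod.collapse .
  also have "\<dots> \<le> a + b" using z unfolding rect_def by (auto simp: abs_le_iff)
  finally show ?thesis .
qed

lemma lat_count_upper:
  assumes a: "a > 0" and b: "b > 0" and t: "0 \<le> t"
  shows "real (card (lat a b s \<inter> cball 0 t)) * (a * b) \<le> pi * (t + a + b)\<^sup>2"
proof -
  define S where "S = lat a b s \<inter> cball 0 t"
  have fin: "finite S" unfolding S_def by (rule lat_finite[OF a b])
  have sub: "(\<Union>x\<in>S. rect a b x) \<subseteq> cball 0 (t + a + b)"
  proof clarify
    fix x z assume x: "x \<in> S" and z: "z \<in> rect a b x"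
    have "norm z \<le> norm x + norm (z - x)" by (metis add.commute diff_add_cancel norm_triangle_ineq)
    also have "\<dots> \<le> t + (a + b)" using x rect_norm[OF z] a b unfolding S_def by (intro add_mono) auto
    finally show "z \<in> cball 0 (t + a + b)" by (simp add: add.assoc)
  qed
  have "measure lborel (\<Union>x\<in>S. rect a b x) = (\<Sum>x\<in>S. measure lborel (rect a b x))"
  proof (rule measure_finite_Union[OF fin])
    show "rect a b ` S \<subseteq> sets lborel" using rect_open by auto
    show "disjoint_family_on (rect a b) S"
      unfolding disjoint_family_on_def S_def using rect_disjoint[OF a b] by blast
    show "emeasure lborel (rect a b x) \<noteq> \<infinity>" for x
      using measure_rect[of a b x] a b unfolding rect_def by (subst emeasure_Times_lborel) (auto simp: ennreal_mult[symmetric])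
  qed
  also have "\<dots> = real (card S) * (a * b)" using measure_rect[of a b] a b by simp
  finally have e: "measure lborel (\<Union>x\<in>S. rect a b x) = real (card S) * (a * b)" .
  have "measure lborel (\<Union>x\<in>S. rect a b x) \<le> measure lborel (cball (0::real\<times>real) (t + a + b))"
  proof (rule measure_mono_fmeasurable[OF sub])
    show "(\<Union>x\<in>S. rect a b x) \<in> sets lborel" using fin rect_open by (intro sets.finite_UN) auto
    show "cball (0::real\<times>real) (t + a + b) \<in> fmeasurable lborel" using bounded_fmeasurable[of "cball 0 (t + a + b)"] by auto
  qed
  also have "\<dots> = pi * (t + a + b)\<^sup>2" using a b t by (intro measure_cball_2) auto
  finally show ?thesis using e unfolding S_def by simp
qed

lemma lat_count_lower:
  assumes a: "a > 0" and b: "b > 0" and t: "a + b \<le> t"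
  shows "pi * (t - a - b)\<^sup>2 \<le> real (card (lat a b s \<inter> cball 0 t)) * (a * b)"
proof -
  define S where "S = lat a b s \<inter> cball 0 t"
  have fin: "finite S" unfolding S_def by (rule lat_finite[OF a b])
  have sub: "cball 0 (t - a - b) \<subseteq> (\<Union>x\<in>S. crect a b x)"
  proof
    fix y :: "real \<times> real" assume y: "y \<in> cball 0 (t - a - b)"
    obtain x where x: "x \<in> lat a b s" "y \<in> crect a b x" "norm (y - x) \<le> a + b"
      using lat_cover[OF a b] by blast
    have "norm x \<le> norm y + norm (y - x)" by (metis add_diff_cancel_left' diff_add_cancel norm_minus_commute norm_triangle_ineq4 order.trans order_refl add.commute norm_triangle_ineq2 diff_le_eq)
    also have "\<dots> \<le> t" using y x(3) by simp
    finally have "x \<in> S" unfolding S_def using x(1) by simp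
    then show "y \<in> (\<Union>x\<in>S. crect a b x)" using x(2) by blast
  qed
  have "pi * (t - a - b)\<^sup>2 = measure lborel (cball (0::real\<times>real) (t - a - b))"
    using t by (intro measure_cball_2[symmetric]) auto
  also have "\<dots> \<le> measure lborel (\<Union>x\<in>S. crect a b x)"
  proof (rule measure_mono_fmeasurable[OF sub])
    show "cball 0 (t - a - b) \<in> sets lborel" by simp
    show "(\<Union>x\<in>S. crect a b x) \<in> fmeasurable lborel"
    proof (rule bounded_fmeasurable)
      show "bounded (\<Union>x\<in>S. crect a b x)" using fin unfolding crect_def
        by (intro bounded_UN ballI bounded_Times) auto
      show "(\<Union>x\<in>S. crect a b x) \<in> sets borel" using fin crect_closed by (intro sets.finite_UN) auto
    qed
  qed
  also have "\<dots> \<le> (\<Sum>x\<in>S. measure lborel (crect a b x))"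
    using fin crect_closed by (intro measure_UNION_le) auto
  also have "\<dots> = real (card S) * (a * b)" using measure_crect[of a b] a b by simp
  finally show ?thesis unfolding S_def .
qed


lemma measure_translate:
  fixes C :: "(real \<times> real) set"
  assumes C: "open C"
  shows "measure lborel ((+) x ` C) = measure lborel C"
proof -
  have o: "open ((+) x ` C)" using open_translation[OF C, of x] by simp
  have "emeasure lborel ((+) x ` C) = emeasure (distr lborel borel ((+) x)) ((+) x ` C)"
    by (simp add: lborel_distr_plus)
  also have "\<dots> = emeasure lborel ((+) x -` ((+) x ` C) \<inter> space lborel)"
    using o by (intro emeasure_distr) auto
  also have "(+) x -` ((+) x ` C) \<inter> space lborel = C" by auto
  finally show ?thesis unfolding measure_def by simp
qed

lemma bounded_translate_fin:
  fixes C :: "(real \<times> real) set"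
  assumes "bounded C"
  shows "emeasure lborel ((+) x ` C) \<noteq> \<infinity>"
proof -
  have "bounded ((+) x ` C)" using bounded_translation[OF assms, of x] by simp
  then have "emeasure lborel ((+) x ` C) < \<infinity>" by (rule emeasure_bounded_finite)
  then show ?thesis by simp
qed

lemma density:
  fixes C :: "(real \<times> real) set"
  assumes a: "a > 0" and b: "b > 0" and C: "open C" and Cb: "C \<subseteq> ball 0 Rb" and Rb: "Rb \<ge> 0"
    and disj: "\<And>x y. x \<in> lat a b s \<Longrightarrow> y \<in> lat a b s \<Longrightarrow> x \<noteq> y \<Longrightarrow> ((+) x ` C) \<inter> ((+) y ` C) = {}"
  shows "((\<lambda>r. measure lborel ((\<Union>x\<in>lat a b s. (+) x ` C) \<inter> ball 0 r) / (pi * r\<^sup>2))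
           \<longlongrightarrow> measure lborel C / (a*b)) at_top"
proof -
  define L where "L = lat a b s"
  define \<mu> where "\<mu> = measure lborel C"
  define Q where "Q = (\<Union>x\<in>L. (+) x ` C)"
  define N where "N t = real (card (L \<inter> cball 0 t))" for t
  define E where "E = Rb + a + b"
  have \<mu>0: "\<mu> \<ge> 0" unfolding \<mu>_def by simp
  have bC: "bounded C" using Cb bounded_subset[OF bounded_ball] by blast
  have oT: "open ((+) x ` C)" for x using open_translation[OF C, of x] by simp
  have mT: "measure lborel ((+) x ` C) = \<mu>" for x unfolding \<mu>_def by (rule measure_translate[OF C])
  have fin: "finite (L \<inter> cball 0 t)" for t unfolding L_def by (rule lat_finite[OF a b])
  have Qo: "open Q" unfolding Q_def using oT by auto
  have Qf: "Q \<inter> ball 0 r \<in> fmeasurable lborel" for r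
    by (rule bounded_fmeasurable) (use Qo in auto)
  have dfam: "disjoint_family_on (\<lambda>x. (+) x ` C) (L \<inter> cball 0 t)" for t
    unfolding disjoint_family_on_def L_def using disj by blast
  have lower: "N (r - Rb) * \<mu> \<le> measure lborel (Q \<inter> ball 0 r)" for r
  proof -
    have "measure lborel (\<Union>x\<in>L \<inter> cball 0 (r - Rb). (+) x ` C) = (\<Sum>x\<in>L \<inter> cball 0 (r - Rb). measure lborel ((+) x ` C))"
      by (rule measure_finite_Union[OF fin]) (use oT dfam bounded_translate_fin[OF bC] in auto)
    also have "\<dots> = N (r - Rb) * \<mu>" unfolding mT N_def by simp
    finally have e: "measure lborel (\<Union>x\<in>L \<inter> cball 0 (r - Rb). (+) x ` C) = N (r - Rb) * \<mu>" .
    have "(\<Union>x\<in>L \<inter> cball 0 (r - Rb). (+) x ` C) \<subseteq> Q \<inter> ball 0 r"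
    proof
      fix y assume "y \<in> (\<Union>x\<in>L \<inter> cball 0 (r - Rb). (+) x ` C)"
      then obtain x c where x: "x \<in> L" "norm x \<le> r - Rb" and c: "c \<in> C" and y: "y = x + c" by auto
      have "norm (x + c) \<le> norm x + norm c" by (rule norm_triangle_ineq)
      also have "\<dots> < (r - Rb) + Rb" using x c Cb by (intro add_le_less_mono) auto
      finally show "y \<in> Q \<inter> ball 0 r" unfolding Q_def using x c y by auto
    qed
    then have "measure lborel (\<Union>x\<in>L \<inter> cball 0 (r - Rb). (+) x ` C) \<le> measure lborel (Q \<inter> ball 0 r)"
      by (rule measure_mono_fmeasurable) (use fin oT Qf in auto)
    then show ?thesis using e by simp
  qed
  have upper: "measure lborel (Q \<inter> ball 0 r) \<le> N (r + Rb) * \<mu>" for r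
  proof -
    have sub: "Q \<inter> ball 0 r \<subseteq> (\<Union>x\<in>L \<inter> cball 0 (r + Rb). (+) x ` C)"
    proof
      fix y assume "y \<in> Q \<inter> ball 0 r"
      then obtain x c where x: "x \<in> L" and c: "c \<in> C" and xc: "x + c \<in> ball 0 r" and y: "y = x + c"
        unfolding Q_def by auto
      have "norm x \<le> norm (x + c) + norm c" by (metis add_diff_cancel norm_triangle_ineq4)
      also have "\<dots> \<le> r + Rb" using xc c Cb by (intro add_mono) auto
      finally show "y \<in> (\<Union>x\<in>L \<inter> cball 0 (r + Rb). (+) x ` C)" using x c y by auto
    qed
    have "measure lborel (Q \<inter> ball 0 r) \<le> measure lborel (\<Union>x\<in>L \<inter> cball 0 (r + Rb). (+) x ` C)"
    proof (rule measure_mono_fmeasurable[OF sub])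
      show "Q \<inter> ball 0 r \<in> sets lborel" using Qo by auto
      show "(\<Union>x\<in>L \<inter> cball 0 (r + Rb). (+) x ` C) \<in> fmeasurable lborel"
      proof (rule bounded_fmeasurable)
        show "bounded (\<Union>x\<in>L \<inter> cball 0 (r + Rb). (+) x ` C)"
          using fin bounded_translation[OF bC] by (intro bounded_UN) auto
        have "open (\<Union>x\<in>L \<inter> cball 0 (r + Rb). (+) x ` C)" using oT by (intro open_UN) auto
        then show "(\<Union>x\<in>L \<inter> cball 0 (r + Rb). (+) x ` C) \<in> sets borel" by simp
      qed
    qed
    also have "\<dots> \<le> (\<Sum>x\<in>L \<inter> cball 0 (r + Rb). measure lborel ((+) x ` C))"
      by (rule measure_UNION_le[OF fin]) (use oT in auto)
    also have "\<dots> = N (r + Rb) * \<mu>" unfolding mT N_def by simp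
    finally show ?thesis .
  qed
  have ab: "a * b > 0" using a b by simp
  have lo: "\<mu> / (a*b) * ((r - E)/r)\<^sup>2 \<le> measure lborel (Q \<inter> ball 0 r) / (pi * r\<^sup>2)" if r: "r \<ge> E + 1" for r
  proof -
    have rp: "r > 0" using r Rb a b unfolding E_def by linarith
    have "pi * ((r - Rb) - a - b)\<^sup>2 \<le> N (r - Rb) * (a * b)"
      unfolding N_def L_def by (rule lat_count_lower[OF a b]) (use r in \<open>simp add: E_def\<close>)
    then have "\<mu> * (pi * (r - E)\<^sup>2) \<le> \<mu> * (N (r - Rb) * (a * b))"
      using \<mu>0 unfolding E_def by (intro mult_left_mono) (auto simp: algebra_simps)
    then have "\<mu> * (pi * (r - E)\<^sup>2) / (a*b) \<le> N (r - Rb) * \<mu>" using ab by (simp add: field_simps)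
    also have "\<dots> \<le> measure lborel (Q \<inter> ball 0 r)" by (rule lower)
    finally have "\<mu> * (pi * (r - E)\<^sup>2) / (a*b) / (pi * r\<^sup>2) \<le> measure lborel (Q \<inter> ball 0 r) / (pi * r\<^sup>2)"
      by (rule divide_right_mono) simp
    moreover have "\<mu> * (pi * (r - E)\<^sup>2) / (a*b) / (pi * r\<^sup>2) = \<mu> / (a*b) * ((r - E)/r)\<^sup>2"
      using rp a b by (simp add: field_simps power2_eq_square)
    ultimately show ?thesis by simp
  qed
  have hi: "measure lborel (Q \<inter> ball 0 r) / (pi * r\<^sup>2) \<le> \<mu> / (a*b) * ((r + E)/r)\<^sup>2" if r: "r \<ge> E + 1" for r
  proof -
    have rp: "r > 0" using r Rb a b unfolding E_def by linarith
    have "N (r + Rb) * (a * b) \<le> pi * ((r + Rb) + a + b)\<^sup>2"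
      unfolding N_def L_def by (rule lat_count_upper[OF a b]) (use rp Rb in simp)
    then have "\<mu> * (N (r + Rb) * (a * b)) \<le> \<mu> * (pi * (r + E)\<^sup>2)"
      using \<mu>0 unfolding E_def by (intro mult_left_mono) (auto simp: algebra_simps)
    then have "N (r + Rb) * \<mu> \<le> \<mu> * (pi * (r + E)\<^sup>2) / (a*b)" using ab by (simp add: field_simps)
    with upper[of r] have "measure lborel (Q \<inter> ball 0 r) \<le> \<mu> * (pi * (r + E)\<^sup>2) / (a*b)" by linarith
    then have "measure lborel (Q \<inter> ball 0 r) / (pi * r\<^sup>2) \<le> \<mu> * (pi * (r + E)\<^sup>2) / (a*b) / (pi * r\<^sup>2)"
      by (rule divide_right_mono) simp
    moreover have "\<mu> * (pi * (r + E)\<^sup>2) / (a*b) / (pi * r\<^sup>2) = \<mu> / (a*b) * ((r + E)/r)\<^sup>2"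
      using rp a b by (simp add: field_simps power2_eq_square)
    ultimately show ?thesis by simp
  qed
  have l1: "((\<lambda>r. ((r - E)/r)\<^sup>2) \<longlongrightarrow> 1) at_top" by real_asymp
  have l2: "((\<lambda>r. ((r + E)/r)\<^sup>2) \<longlongrightarrow> 1) at_top" by real_asymp
  have "((\<lambda>r. measure lborel (Q \<inter> ball 0 r) / (pi * r\<^sup>2)) \<longlongrightarrow> \<mu> / (a*b)) at_top"
  proof (rule tendsto_sandwich)
    show "\<forall>\<^sub>F r in at_top. \<mu> / (a*b) * ((r - E)/r)\<^sup>2 \<le> measure lborel (Q \<inter> ball 0 r) / (pi * r\<^sup>2)"
      using lo by (intro eventually_at_top_linorderI[of "E+1"]) auto
    show "\<forall>\<^sub>F r in at_top. measure lborel (Q \<inter> ball 0 r) / (pi * r\<^sup>2) \<le> \<mu> / (a*b) * ((r + E)/r)\<^sup>2"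
      using hi by (intro eventually_at_top_linorderI[of "E+1"]) auto
    show "((\<lambda>r. \<mu> / (a*b) * ((r - E)/r)\<^sup>2) \<longlongrightarrow> \<mu> / (a*b)) at_top"
      using tendsto_mult_left[OF l1, of "\<mu> / (a*b)"] by simp
    show "((\<lambda>r. \<mu> / (a*b) * ((r + E)/r)\<^sup>2) \<longlongrightarrow> \<mu> / (a*b)) at_top"
      using tendsto_mult_left[OF l2, of "\<mu> / (a*b)"] by simp
  qed
  then show ?thesis unfolding Q_def L_def \<mu>_def .
qed


lemma cell_char:
  fixes L Nb :: "(real \<times> real) set" and \<rho> :: real
  assumes diff: "\<And>x y. x \<in> L \<Longrightarrow> y \<in> L \<Longrightarrow> x - y \<in> L"
    and add: "\<And>x y. x \<in> L \<Longrightarrow> y \<in> L \<Longrightarrow> x + y \<in> L"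
    and Nb: "finite Nb" "Nb \<noteq> {}" "Nb \<subseteq> L - {0}"
    and key: "\<And>z w. (\<forall>n\<in>Nb. \<rho> * norm z < norm (n - z)) \<Longrightarrow> w \<in> L - {0} \<Longrightarrow> \<exists>n\<in>Nb. norm (n - z) \<le> norm (w - z)"
    and x: "x \<in> L"
  shows "Q_cell L \<rho> x = (+) x ` {z. \<forall>n\<in>Nb. \<rho> * norm z < norm (n - z)}"
proof -
  define C where "C = {z. \<forall>n\<in>Nb. \<rho> * norm z < norm (n - z)}"
  have img: "(\<lambda>x'. norm (x' - y)) ` (L - {x}) = (\<lambda>w. norm (w - (y - x))) ` (L - {0})" for y
  proof (rule set_eqI, rule iffI)
    fix v assume "v \<in> (\<lambda>x'. norm (x' - y)) ` (L - {x})"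
    then obtain x' where x': "x' \<in> L" "x' \<noteq> x" "v = norm (x' - y)" by auto
    have "x' - x \<in> L - {0}" using x' x diff by auto
    moreover have "v = norm ((x' - x) - (y - x))" using x' by (simp add: algebra_simps)
    ultimately show "v \<in> (\<lambda>w. norm (w - (y - x))) ` (L - {0})" by blast
  next
    fix v assume "v \<in> (\<lambda>w. norm (w - (y - x))) ` (L - {0})"
    then obtain w where w: "w \<in> L" "w \<noteq> 0" "v = norm (w - (y - x))" by auto
    have "x + w \<in> L - {x}" using w x add by auto
    moreover have "v = norm ((x + w) - y)" using w by (simp add: algebra_simps)
    ultimately show "v \<in> (\<lambda>x'. norm (x' - y)) ` (L - {x})" by blast
  qed
  have bdd: "bdd_below ((\<lambda>w. norm (w - z)) ` S)" for z S by (rule bdd_belowI[of _ 0]) auto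
  have main: "(INF w\<in>L - {0}. norm (w - z)) > \<rho> * norm z \<longleftrightarrow> z \<in> C" for z
  proof
    assume h: "(INF w\<in>L - {0}. norm (w - z)) > \<rho> * norm z"
    show "z \<in> C" unfolding C_def
    proof safe
      fix n assume n: "n \<in> Nb"
      have "(INF w\<in>L - {0}. norm (w - z)) \<le> norm (n - z)"
        using n Nb(3) by (intro cINF_lower bdd) auto
      then show "\<rho> * norm z < norm (n - z)" using h by linarith
    qed
  next
    assume z: "z \<in> C"
    define m where "m = Min ((\<lambda>n. norm (n - z)) ` Nb)"
    have "m > \<rho> * norm z" unfolding m_def using Nb(1,2) z unfolding C_def by (subst Min_gr_iff) auto
    moreover have "m \<le> (INF w\<in>L - {0}. norm (w - z))"
    proof (rule cINF_greatest)
      show "L - {0} \<noteq> {}" using Nb by auto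
      fix w assume w: "w \<in> L - {0}"
      have "\<exists>n\<in>Nb. norm (n - z) \<le> norm (w - z)" using key[of z w] z w unfolding C_def by blast
      then obtain n where n: "n \<in> Nb" "norm (n - z) \<le> norm (w - z)" by blast
      have "m \<le> norm (n - z)" unfolding m_def using Nb(1) n(1) by (intro Min_le) auto
      then show "m \<le> norm (w - z)" using n(2) by linarith
    qed
    ultimately show "(INF w\<in>L - {0}. norm (w - z)) > \<rho> * norm z" by linarith
  qed
  show ?thesis
  proof (rule set_eqI)
    fix y
    have "y \<in> Q_cell L \<rho> x \<longleftrightarrow> (INF x'\<in>L - {x}. norm (x' - y)) > \<rho> * norm (x - y)"
      unfolding Q_cell_def by simp
    also have "(INF x'\<in>L - {x}. norm (x' - y)) = (INF w\<in>L - {0}. norm (w - (y - x)))"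
      using img[of y] by (simp add: image_image)
    also have "norm (x - y) = norm (y - x)" by (rule norm_minus_commute)
    also have "(INF w\<in>L - {0}. norm (w - (y - x))) > \<rho> * norm (y - x) \<longleftrightarrow> y - x \<in> C" by (rule main)
    also have "\<dots> \<longleftrightarrow> y \<in> (+) x ` C" by (auto intro: image_eqI[where x="y - x"])
    finally show "y \<in> Q_cell L \<rho> x \<longleftrightarrow> y \<in> (+) x ` {z. \<forall>n\<in>Nb. \<rho> * norm z < norm (n - z)}"
      unfolding C_def .
  qed
qed

lemma cell_disj:
  fixes L :: "(real \<times> real) set"
  assumes \<rho>: "\<rho> \<ge> 1" and x: "x \<in> L" and x': "x' \<in> L" and xx: "x \<noteq> x'"
  shows "Q_cell L \<rho> x \<inter> Q_cell L \<rho> x' = {}"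
proof (rule ccontr)
  assume "Q_cell L \<rho> x \<inter> Q_cell L \<rho> x' \<noteq> {}"
  then obtain y where y1: "y \<in> Q_cell L \<rho> x" and y2: "y \<in> Q_cell L \<rho> x'" by blast
  have bdd: "bdd_below ((\<lambda>w. norm (w - y)) ` S)" for S by (rule bdd_belowI[of _ 0]) auto
  have "(INF w\<in>L - {x}. norm (w - y)) \<le> norm (x' - y)" using x' xx by (intro cINF_lower bdd) auto
  then have h1: "\<rho> * norm (x - y) < norm (x' - y)" using y1 unfolding Q_cell_def by simp
  have "(INF w\<in>L - {x'}. norm (w - y)) \<le> norm (x - y)" using x xx by (intro cINF_lower bdd) auto
  then have h2: "\<rho> * norm (x' - y) < norm (x - y)" using y2 unfolding Q_cell_def by simp
  have "norm (x - y) \<le> \<rho> * norm (x - y)" "norm (x' - y) \<le> \<rho> * norm (x' - y)"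
    using \<rho> by (auto intro: mult_right_mono[of 1 \<rho>, simplified])
  then show False using h1 h2 by linarith
qed

lemma sq_less_iff: fixes A B :: real shows "0 \<le> A \<Longrightarrow> 0 \<le> B \<Longrightarrow> A < B \<longleftrightarrow> A\<^sup>2 < B\<^sup>2"
  by (auto intro: power_strict_mono power2_less_imp_less)

lemma apollo:
  fixes a \<rho> u1 u2 :: real and z :: "real \<times> real"
  assumes a: "a > 0" and \<rho>: "\<rho> > 1" and u: "u1\<^sup>2 + u2\<^sup>2 = 1"
  defines "k \<equiv> a / (\<rho>\<^sup>2 - 1)"
  shows "\<rho> * norm z < norm ((a*u1, a*u2) - z) \<longleftrightarrow> (fst z + k*u1)\<^sup>2 + (snd z + k*u2)\<^sup>2 < (\<rho>*k)\<^sup>2"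
proof -
  obtain p q where z: "z = (p, q)" by (cases z)
  have r1: "\<rho>\<^sup>2 - 1 > 0" using \<rho> by (simp add: power2_eq_square) (smt (verit) mult_less_cancel_left1)
  have ak: "a = k * (\<rho>\<^sup>2 - 1)" unfolding k_def using r1 by simp
  have k: "k > 0" unfolding k_def using a r1 by simp
  have "\<rho> * norm z < norm ((a*u1, a*u2) - z) \<longleftrightarrow> (\<rho> * norm z)\<^sup>2 < (norm ((a*u1, a*u2) - z))\<^sup>2"
    using \<rho> by (intro sq_less_iff) auto
  also have "\<dots> \<longleftrightarrow> \<rho>\<^sup>2 * (p\<^sup>2 + q\<^sup>2) < (a*u1 - p)\<^sup>2 + (a*u2 - q)\<^sup>2"
    unfolding z by (simp add: norm_Pair power_mult_distrib)
  also have "(a*u1 - p)\<^sup>2 + (a*u2 - q)\<^sup>2 - \<rho>\<^sup>2 * (p\<^sup>2 + q\<^sup>2)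
      = (\<rho>\<^sup>2 - 1) * ((\<rho>*k)\<^sup>2 - ((p + k*u1)\<^sup>2 + (q + k*u2)\<^sup>2))"
  proof -
    have "(a*u1 - p)\<^sup>2 + (a*u2 - q)\<^sup>2 - \<rho>\<^sup>2 * (p\<^sup>2 + q\<^sup>2) = a\<^sup>2*(u1\<^sup>2+u2\<^sup>2) - 2*a*(u1*p + u2*q) - (\<rho>\<^sup>2 - 1)*(p\<^sup>2+q\<^sup>2)"
      by (simp add: power2_eq_square algebra_simps)
    also have "\<dots> = (\<rho>\<^sup>2 - 1) * ((\<rho>*k)\<^sup>2 - ((p + k*u1)\<^sup>2 + (q + k*u2)\<^sup>2)) - (\<rho>\<^sup>2 - 1) * (\<rho>*k)\<^sup>2 * (1 - (u1\<^sup>2+u2\<^sup>2))"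
      unfolding ak by (simp add: power2_eq_square algebra_simps)
    finally show ?thesis using u by simp
  qed
  then have "\<rho>\<^sup>2 * (p\<^sup>2 + q\<^sup>2) < (a*u1 - p)\<^sup>2 + (a*u2 - q)\<^sup>2 \<longleftrightarrow> 0 < (\<rho>\<^sup>2 - 1) * ((\<rho>*k)\<^sup>2 - ((p + k*u1)\<^sup>2 + (q + k*u2)\<^sup>2))"
    by linarith
  also have "\<dots> \<longleftrightarrow> (p + k*u1)\<^sup>2 + (q + k*u2)\<^sup>2 < (\<rho>*k)\<^sup>2" using r1 by (simp add: zero_less_mult_iff)
  finally show ?thesis unfolding z by simp
qed

lemma abs_sq_split:
  fixes p k X :: real
  assumes "k \<ge> 0"
  shows "(\<bar>p\<bar> + k)\<^sup>2 < X \<longleftrightarrow> (p + k)\<^sup>2 < X \<and> (p - k)\<^sup>2 < X"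
proof (cases "p \<ge> 0")
  case True
  have "(p - k)\<^sup>2 \<le> (p + k)\<^sup>2" using True assms by (simp add: power2_eq_square algebra_simps)
  then show ?thesis using True by auto
next
  case False
  have "k * p \<le> 0" using False assms by (simp add: mult_nonneg_nonpos)
  then have "(p + k)\<^sup>2 \<le> (p - k)\<^sup>2" by (simp add: power2_eq_square algebra_simps)
  moreover have "(\<bar>p\<bar> + k)\<^sup>2 = (p - k)\<^sup>2" using False by (simp add: power2_eq_square algebra_simps)
  ultimately show ?thesis by auto
qed


lemma sq_lat: "square_lattice a = lat a a 0"
  unfolding square_lattice_def lat_def by simp

lemma norm_le_sq: "norm ((x1::real, x2::real)) \<le> norm (y1, y2) \<longleftrightarrow> x1\<^sup>2 + x2\<^sup>2 \<le> y1\<^sup>2 + y2\<^sup>2"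
  by (simp add: norm_Pair)

lemma norm_lt_sq: "norm ((x1::real, x2::real)) < norm (y1, y2) \<longleftrightarrow> x1\<^sup>2 + x2\<^sup>2 < y1\<^sup>2 + y2\<^sup>2"
  by (simp add: norm_Pair)

lemma int_ge1_sq:
  fixes a p :: real and i :: int
  assumes a: "a > 0" and p: "\<bar>p\<bar> < a/2" and i: "i \<ge> 1"
  shows "(a - p)\<^sup>2 \<le> (a * of_int i - p)\<^sup>2"
proof -
  have "a \<le> a * of_int i" using a i by simp
  then show ?thesis using p by (intro power_mono) auto
qed

lemma int_lem1_sq:
  fixes a p :: real and i :: int
  assumes a: "a > 0" and p: "\<bar>p\<bar> < a/2" and i: "i \<le> -1"
  shows "(-a - p)\<^sup>2 \<le> (a * of_int i - p)\<^sup>2"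
proof -
  have "of_int i \<le> (-1::real)" using i by simp
  then have "a * of_int i \<le> a * (-1)" using a by (intro mult_left_mono) auto
  then have "a * of_int i \<le> -a" by simp
  then have "a + p \<le> p - a * of_int i" by linarith
  then have "(a + p)\<^sup>2 \<le> (p - a * of_int i)\<^sup>2" using p by (intro power_mono) auto
  then show ?thesis by (simp add: power2_commute) (simp add: power2_eq_square algebra_simps)
qed

lemma int_any_sq:
  fixes a q :: real and j :: int
  assumes a: "a > 0" and q: "\<bar>q\<bar> < a/2"
  shows "q\<^sup>2 \<le> (a * of_int j - q)\<^sup>2"
proof (cases "j = 0")
  case True then show ?thesis by simp
next
  case False
  then have "j \<ge> 1 \<or> j \<le> -1" by linarith
  then show ?thesis
  proof
    assume "j \<ge> 1"
    from int_ge1_sq[OF a q this] have "(a - q)\<^sup>2 \<le> (a * of_int j - q)\<^sup>2" .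
    moreover have "q\<^sup>2 \<le> (a - q)\<^sup>2"
    proof -
      have "\<bar>q\<bar> \<le> a - q" using q by linarith
      then have "\<bar>q\<bar>\<^sup>2 \<le> (a - q)\<^sup>2" by (intro power_mono) auto
      then show ?thesis by simp
    qed
    ultimately show ?thesis by linarith
  next
    assume "j \<le> -1"
    from int_lem1_sq[OF a q this] have "(-a - q)\<^sup>2 \<le> (a * of_int j - q)\<^sup>2" .
    moreover have "q\<^sup>2 \<le> (-a - q)\<^sup>2"
    proof -
      have "\<bar>q\<bar> \<le> a + q" using q by linarith
      then have "\<bar>q\<bar>\<^sup>2 \<le> (a + q)\<^sup>2" by (intro power_mono) auto
      then show ?thesis by (simp add: power2_eq_square algebra_simps)
    qed
    ultimately show ?thesis by linarith
  qed
qed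

definition Nb_sq :: "real \<Rightarrow> (real \<times> real) set" where
  "Nb_sq a = {(a,0), (-a,0), (0,a), (0,-a)}"

lemma Nb_sq_sub: "a > 0 \<Longrightarrow> Nb_sq a \<subseteq> lat a a 0 - {0}"
proof -
  assume a: "a > 0"
  have "(a, 0) \<in> lat a a 0" using lat_memI[of a 1 0 0 a] by simp
  moreover have "(-a, 0) \<in> lat a a 0" using lat_memI[of a "-1" 0 0 a] by simp
  moreover have "(0, a) \<in> lat a a 0" using lat_memI[of a 0 1 0 a] by simp
  moreover have "(0, -a) \<in> lat a a 0" using lat_memI[of a 0 "-1" 0 a] by simp
  ultimately show ?thesis unfolding Nb_sq_def using a by (auto simp: zero_prod_def)
qed

lemma sq_half:
  assumes a: "a > 0" and \<rho>: "\<rho> \<ge> 1" and h: "\<forall>n\<in>Nb_sq a. \<rho> * norm z < norm (n - z)"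
  shows "\<bar>fst z\<bar> < a/2" "\<bar>snd z\<bar> < a/2"
proof -
  obtain p q where z: "z = (p, q)" by (cases z)
  have h': "norm z < norm (n - z)" if "n \<in> Nb_sq a" for n
  proof -
    have "norm z \<le> \<rho> * norm z" using \<rho> by (simp add: mult_le_cancel_right1)
    then show ?thesis using h that by fastforce
  qed
  have "p\<^sup>2 + q\<^sup>2 < (a - p)\<^sup>2 + q\<^sup>2" using h'[of "(a,0)"] unfolding z Nb_sq_def by (simp add: norm_lt_sq)
  moreover have "p\<^sup>2 + q\<^sup>2 < (-a - p)\<^sup>2 + q\<^sup>2" using h'[of "(-a,0)"] unfolding z Nb_sq_def by (simp add: norm_lt_sq)
  ultimately have "0 < a * (a - 2*p)" "0 < a * (a + 2*p)" by (auto simp: power2_eq_square algebra_simps)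
  then have "p < a/2" "-p < a/2" using a by (auto simp: zero_less_mult_iff)
  then show "\<bar>fst z\<bar> < a/2" unfolding z by simp
  have "p\<^sup>2 + q\<^sup>2 < p\<^sup>2 + (a - q)\<^sup>2" using h'[of "(0,a)"] unfolding z Nb_sq_def by (simp add: norm_lt_sq)
  moreover have "p\<^sup>2 + q\<^sup>2 < p\<^sup>2 + (-a - q)\<^sup>2" using h'[of "(0,-a)"] unfolding z Nb_sq_def by (simp add: norm_lt_sq)
  ultimately have "0 < a * (a - 2*q)" "0 < a * (a + 2*q)" by (auto simp: power2_eq_square algebra_simps)
  then have "q < a/2" "-q < a/2" using a by (auto simp: zero_less_mult_iff)
  then show "\<bar>snd z\<bar> < a/2" unfolding z by simp
qed

lemma key_sq:
  assumes a: "a > 0" and \<rho>: "\<rho> \<ge> 1" and h: "\<forall>n\<in>Nb_sq a. \<rho> * norm z < norm (n - z)"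
    and w: "w \<in> lat a a 0 - {0}"
  shows "\<exists>n\<in>Nb_sq a. norm (n - z) \<le> norm (w - z)"
proof -
  obtain p q where z: "z = (p, q)" by (cases z)
  have p: "\<bar>p\<bar> < a/2" and q: "\<bar>q\<bar> < a/2" using sq_half[OF a \<rho> h] z by auto
  from w have "w \<in> lat a a 0" by simp
  then obtain i j where we: "w = (a * (of_int i + of_int j * 0), a * of_int j)" by (rule lat_memE)
  then have we: "w = (a * of_int i, a * of_int j)" by simp
  have ij: "i \<noteq> 0 \<or> j \<noteq> 0" using w we a by (auto simp: zero_prod_def)
  show ?thesis
  proof (cases "i = 0")
    case False
    then have "i \<ge> 1 \<or> i \<le> -1" by linarith
    then show ?thesis
    proof
      assume i: "i \<ge> 1"
      have "(a - p)\<^sup>2 + (0 - q)\<^sup>2 \<le> (a * of_int i - p)\<^sup>2 + (a * of_int j - q)\<^sup>2"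
        using int_ge1_sq[OF a p i] int_any_sq[OF a q, of j] by simp
      then have "norm ((a,0) - z) \<le> norm (w - z)" unfolding we z by (simp add: norm_le_sq)
      then show ?thesis unfolding Nb_sq_def by blast
    next
      assume i: "i \<le> -1"
      have "(-a - p)\<^sup>2 + (0 - q)\<^sup>2 \<le> (a * of_int i - p)\<^sup>2 + (a * of_int j - q)\<^sup>2"
        using int_lem1_sq[OF a p i] int_any_sq[OF a q, of j] by simp
      then have "norm ((-a,0) - z) \<le> norm (w - z)" unfolding we z by (simp add: norm_le_sq)
      then show ?thesis unfolding Nb_sq_def by blast
    qed
  next
    case True
    then have "j \<ge> 1 \<or> j \<le> -1" using ij by linarith
    then show ?thesis
    proof
      assume j: "j \<ge> 1"
      have "(0 - p)\<^sup>2 + (a - q)\<^sup>2 \<le> (a * of_int i - p)\<^sup>2 + (a * of_int j - q)\<^sup>2"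
        using int_ge1_sq[OF a q j] True by simp
      then have "norm ((0,a) - z) \<le> norm (w - z)" unfolding we z by (simp add: norm_le_sq)
      then show ?thesis unfolding Nb_sq_def by blast
    next
      assume j: "j \<le> -1"
      have "(0 - p)\<^sup>2 + (-a - q)\<^sup>2 \<le> (a * of_int i - p)\<^sup>2 + (a * of_int j - q)\<^sup>2"
        using int_lem1_sq[OF a q j] True by simp
      then have "norm ((0,-a) - z) \<le> norm (w - z)" unfolding we z by (simp add: norm_le_sq)
      then show ?thesis unfolding Nb_sq_def by blast
    qed
  qed
qed

lemma sq_cell_Gset:
  assumes a: "a > 0" and \<rho>: "\<rho> > 1"
  defines "k \<equiv> a / (\<rho>\<^sup>2 - 1)"
  shows "{z. \<forall>n\<in>Nb_sq a. \<rho> * norm z < norm (n - z)} = Gset k 0 k (\<rho> * k)"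
proof (rule set_eqI)
  fix z :: "real \<times> real"
  obtain p q where z: "z = (p, q)" by (cases z)
  have k: "k \<ge> 0" unfolding k_def using \<rho> a by (simp add: power2_eq_square) (smt (verit) mult_less_cancel_left1 divide_pos_pos)
  have e1: "\<rho> * norm z < norm ((a,0) - z) \<longleftrightarrow> (p + k)\<^sup>2 + q\<^sup>2 < (\<rho>*k)\<^sup>2"
    using apollo[OF a \<rho>, of 1 0 z] unfolding k_def z by simp
  have e2: "\<rho> * norm z < norm ((-a,0) - z) \<longleftrightarrow> (p - k)\<^sup>2 + q\<^sup>2 < (\<rho>*k)\<^sup>2"
    using apollo[OF a \<rho>, of "-1" 0 z] unfolding k_def z by simp
  have e3: "\<rho> * norm z < norm ((0,a) - z) \<longleftrightarrow> p\<^sup>2 + (q + k)\<^sup>2 < (\<rho>*k)\<^sup>2"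
    using apollo[OF a \<rho>, of 0 1 z] unfolding k_def z by simp
  have e4: "\<rho> * norm z < norm ((0,-a) - z) \<longleftrightarrow> p\<^sup>2 + (q - k)\<^sup>2 < (\<rho>*k)\<^sup>2"
    using apollo[OF a \<rho>, of 0 "-1" z] unfolding k_def z by simp
  have s1: "(\<bar>p\<bar> + k)\<^sup>2 + q\<^sup>2 < (\<rho>*k)\<^sup>2 \<longleftrightarrow> (p + k)\<^sup>2 + q\<^sup>2 < (\<rho>*k)\<^sup>2 \<and> (p - k)\<^sup>2 + q\<^sup>2 < (\<rho>*k)\<^sup>2"
    using abs_sq_split[OF k, of p "(\<rho>*k)\<^sup>2 - q\<^sup>2"] by linarith
  have s2: "p\<^sup>2 + (\<bar>q\<bar> + k)\<^sup>2 < (\<rho>*k)\<^sup>2 \<longleftrightarrow> p\<^sup>2 + (q + k)\<^sup>2 < (\<rho>*k)\<^sup>2 \<and> p\<^sup>2 + (q - k)\<^sup>2 < (\<rho>*k)\<^sup>2"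
    using abs_sq_split[OF k, of q "(\<rho>*k)\<^sup>2 - p\<^sup>2"] by linarith
  show "z \<in> {z. \<forall>n\<in>Nb_sq a. \<rho> * norm z < norm (n - z)} \<longleftrightarrow> z \<in> Gset k 0 k (\<rho> * k)"
    unfolding Gset_def Nb_sq_def using e1 e2 e3 e4 s1 s2 unfolding z by auto
qed


lemma tri_lat: "triangular_lattice a = lat a (a * sqrt 3 / 2) (1/2)"
proof -
  have eq: "(a * (of_int i + of_int j / 2), a * of_int j * sqrt 3 / 2) =
            (a * (of_int i + of_int j * (1/2)), a * sqrt 3 / 2 * of_int j)" for i j :: int
    by simp
  show ?thesis unfolding triangular_lattice_def lat_def eq ..
qed

lemma hex_int:
  fixes i j :: int
  assumes "(i,j) \<notin> {(0,0),(1,0),(-1,0),(0,1),(0,-1),(-1,1),(1,-1)}"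
  shows "3 \<le> i*i + i*j + j*j"
proof (cases "\<bar>i\<bar> \<ge> 3 \<or> \<bar>j\<bar> \<ge> 3")
  case True
  have e: "2*(i*i + i*j + j*j) = i*i + j*j + (i+j)*(i+j)" by (simp add: algebra_simps)
  have "i*i \<ge> 0" "j*j \<ge> 0" "(i+j)*(i+j) \<ge> 0" by auto
  moreover have "i*i \<ge> 9 \<or> j*j \<ge> 9"
  proof -
    have sq9: "x*x \<ge> 9" if "\<bar>x\<bar> \<ge> 3" for x :: int
    proof -
      have "3*3 \<le> \<bar>x\<bar>*\<bar>x\<bar>" by (rule mult_mono) (use that in auto)
      then show ?thesis by (simp add: abs_mult_self_eq)
    qed
    show ?thesis using True sq9 by blast
  qed
  moreover have g: "\<And>A B C D::int. 0 \<le> A \<Longrightarrow> 0 \<le> B \<Longrightarrow> 0 \<le> C \<Longrightarrow> 9 \<le> A \<or> 9 \<le> B \<Longrightarrow>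
      2*(A + D + B) = A + B + C \<Longrightarrow> 3 \<le> A + D + B" by arith
  ultimately show ?thesis using e by blast
next
  case False
  then have "i \<in> {-2,-1,0,1,2}" "j \<in> {-2,-1,0,1,2}" by auto
  then show ?thesis using assms by auto
qed

definition Nb_tr :: "real \<Rightarrow> (real \<times> real) set" where
  "Nb_tr a = {(a,0), (-a,0), (a/2, a * sqrt 3 / 2), (-a/2, -(a * sqrt 3 / 2)),
              (-a/2, a * sqrt 3 / 2), (a/2, -(a * sqrt 3 / 2))}"

lemma Nb_tr_sub: "a > 0 \<Longrightarrow> Nb_tr a \<subseteq> lat a (a * sqrt 3 / 2) (1/2) - {0}"
proof -
  assume a: "a > 0"
  let ?L = "lat a (a * sqrt 3 / 2) (1/2)"
  have "(a, 0) \<in> ?L" using lat_memI[of a 1 0 "1/2" "a * sqrt 3 / 2"] by simp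
  moreover have "(-a, 0) \<in> ?L" using lat_memI[of a "-1" 0 "1/2" "a * sqrt 3 / 2"] by simp
  moreover have "(a/2, a * sqrt 3 / 2) \<in> ?L" using lat_memI[of a 0 1 "1/2" "a * sqrt 3 / 2"] by simp
  moreover have "(-a/2, -(a * sqrt 3 / 2)) \<in> ?L" using lat_memI[of a 0 "-1" "1/2" "a * sqrt 3 / 2"] by simp
  moreover have "(-a/2, a * sqrt 3 / 2) \<in> ?L" using lat_memI[of a "-1" 1 "1/2" "a * sqrt 3 / 2"] by simp
  moreover have "(a/2, -(a * sqrt 3 / 2)) \<in> ?L" using lat_memI[of a 1 "-1" "1/2" "a * sqrt 3 / 2"] by simp
  ultimately show ?thesis unfolding Nb_tr_def using a by (auto simp: zero_prod_def)
qed


lemma norm_sq_pair: "(norm (z :: real \<times> real))\<^sup>2 = (fst z)\<^sup>2 + (snd z)\<^sup>2"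
  by (cases z) (simp add: norm_Pair)

lemma dist_expand:
  fixes n1 n2 p q :: real
  shows "(n1 - p)\<^sup>2 + (n2 - q)\<^sup>2 = (n1\<^sup>2 + n2\<^sup>2) - 2*(n1*p + n2*q) + (p\<^sup>2 + q\<^sup>2)"
  by (simp add: power2_eq_square algebra_simps)

lemma hex_quad:
  fixes V W a :: real
  assumes "\<bar>V\<bar> < a/2" "\<bar>W\<bar> < a/2" "\<bar>V - W\<bar> < a/2"
  shows "V*V + W*W - V*W \<le> a*a/4"
proof -
  have aa: "x*x \<le> a*a/4" if "\<bar>x\<bar> < a/2" for x
  proof -
    have "\<bar>x\<bar>*\<bar>x\<bar> \<le> (a/2)*(a/2)" using that by (intro mult_mono) auto
    then show ?thesis by (simp add: abs_mult_self_eq)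
  qed
  show ?thesis
  proof (cases "0 \<le> V*W")
    case True
    show ?thesis
    proof (cases "\<bar>W\<bar> \<le> \<bar>V\<bar>")
      case True
      have "\<bar>W\<bar>*\<bar>W\<bar> \<le> \<bar>V\<bar>*\<bar>W\<bar>" using True by (intro mult_right_mono) auto
      then have "W*W \<le> V*W" using \<open>0 \<le> V*W\<close> by (simp add: abs_mult_self_eq abs_mult[symmetric])
      then show ?thesis using aa[OF assms(1)] by linarith
    next
      case False
      have "\<bar>V\<bar>*\<bar>V\<bar> \<le> \<bar>V\<bar>*\<bar>W\<bar>" using False by (intro mult_left_mono) auto
      then have "V*V \<le> V*W" using \<open>0 \<le> V*W\<close> by (simp add: abs_mult_self_eq abs_mult[symmetric])
      then show ?thesis using aa[OF assms(2)] by linarith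
    qed
  next
    case False
    have "(V - W)*(V - W) \<le> a*a/4" using aa[OF assms(3)] .
    then show ?thesis using False by (simp add: algebra_simps)
  qed
qed

lemma key_tr:
  fixes a \<rho> :: real and z w :: "real \<times> real"
  assumes a: "a > 0" and \<rho>: "\<rho> \<ge> 1" and h: "\<forall>n\<in>Nb_tr a. \<rho> * norm z < norm (n - z)"
    and w: "w \<in> lat a (a * sqrt 3 / 2) (1/2) - {0}"
  shows "\<exists>n\<in>Nb_tr a. norm (n - z) \<le> norm (w - z)"
proof -
  define \<sigma> where "\<sigma> = sqrt 3"
  have \<sigma>2: "\<sigma> * \<sigma> = 3" and \<sigma>0: "\<sigma> > 0" unfolding \<sigma>_def by auto
  obtain p q where z: "z = (p, q)" by (cases z)
  define V where "V = (p + \<sigma>*q)/2"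
  define W where "W = (\<sigma>*q - p)/2"
  have nz2: "(norm z)\<^sup>2 = p\<^sup>2 + q\<^sup>2" unfolding z by (simp add: norm_sq_pair)
  have h': "norm z < norm (n - z)" if "n \<in> Nb_tr a" for n
  proof -
    have "norm z \<le> \<rho> * norm z" using \<rho> by (simp add: mult_le_cancel_right1)
    then show ?thesis using h that by fastforce
  qed
  have dot: "2*(n1*p + n2*q) < a\<^sup>2" if "(n1,n2) \<in> Nb_tr a" "n1\<^sup>2 + n2\<^sup>2 = a\<^sup>2" for n1 n2
  proof -
    have "norm z < norm ((n1,n2) - z)" using h' that(1) by blast
    then have "p\<^sup>2 + q\<^sup>2 < (n1 - p)\<^sup>2 + (n2 - q)\<^sup>2" unfolding z by (simp add: norm_lt_sq)
    then show ?thesis using that(2) dist_expand[of n1 p n2 q] by linarith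
  qed
  have nsq1: "(a/2)\<^sup>2 + (a*\<sigma>/2)\<^sup>2 = a\<^sup>2" "(-a/2)\<^sup>2 + (a*\<sigma>/2)\<^sup>2 = a\<^sup>2"
     "(a/2)\<^sup>2 + (-(a*\<sigma>/2))\<^sup>2 = a\<^sup>2" "(-a/2)\<^sup>2 + (-(a*\<sigma>/2))\<^sup>2 = a\<^sup>2"
    using \<sigma>2 by (simp_all add: power2_eq_square field_simps)
  have d1: "2*(a*p + 0*q) < a\<^sup>2" by (rule dot) (auto simp: Nb_tr_def)
  have d2: "2*((-a)*p + 0*q) < a\<^sup>2" by (rule dot) (auto simp: Nb_tr_def)
  have d3: "2*((a/2)*p + (a*\<sigma>/2)*q) < a\<^sup>2" by (rule dot) (use nsq1 in \<open>auto simp: Nb_tr_def \<sigma>_def\<close>)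
  have d4: "2*((-a/2)*p + (-(a*\<sigma>/2))*q) < a\<^sup>2" by (rule dot) (use nsq1 in \<open>auto simp: Nb_tr_def \<sigma>_def\<close>)
  have d5: "2*((-a/2)*p + (a*\<sigma>/2)*q) < a\<^sup>2" by (rule dot) (use nsq1 in \<open>auto simp: Nb_tr_def \<sigma>_def\<close>)
  have d6: "2*((a/2)*p + (-(a*\<sigma>/2))*q) < a\<^sup>2" by (rule dot) (use nsq1 in \<open>auto simp: Nb_tr_def \<sigma>_def\<close>)
  have ineq_div: "x < a/2" if "2*(a*x) < a\<^sup>2" for x
  proof -
    have "a * (2*x) < a * a" using that by (simp add: power2_eq_square algebra_simps)
    then have "2*x < a" using a by simp
    then show ?thesis by simp
  qed
  have bp: "\<bar>p\<bar> < a/2" using ineq_div[of p] ineq_div[of "-p"] d1 d2 by (auto simp: algebra_simps)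
  have e3: "2*((a/2)*p + (a*\<sigma>/2)*q) = 2*(a*V)" unfolding V_def by (simp add: field_simps)
  have e4: "2*((-a/2)*p + (-(a*\<sigma>/2))*q) = 2*(a*(-V))" unfolding V_def by (simp add: field_simps)
  have e5: "2*((-a/2)*p + (a*\<sigma>/2)*q) = 2*(a*W)" unfolding W_def by (simp add: field_simps)
  have e6: "2*((a/2)*p + (-(a*\<sigma>/2))*q) = 2*(a*(-W))" unfolding W_def by (simp add: field_simps)
  have "V < a/2" "-V < a/2" using ineq_div[of V] ineq_div[of "-V"] d3 d4 unfolding e3 e4 by auto
  then have bV: "\<bar>V\<bar> < a/2" by auto
  have "W < a/2" "-W < a/2" using ineq_div[of W] ineq_div[of "-W"] d5 d6 unfolding e5 e6 by auto
  then have bW: "\<bar>W\<bar> < a/2" by auto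
  have pVW: "p = V - W" unfolding V_def W_def by (simp add: field_simps)
  have zVW: "3 * (p\<^sup>2 + q\<^sup>2) = 4 * (V*V + W*W - V*W)"
  proof -
    have "\<sigma>*q = V + W" unfolding V_def W_def by (simp add: field_simps)
    then have "3 * q\<^sup>2 = (V + W)*(V + W)" using \<sigma>2 by (metis mult.assoc mult.commute power2_eq_square)
    then show ?thesis unfolding pVW by (simp add: power2_eq_square algebra_simps)
  qed
  have z3: "p\<^sup>2 + q\<^sup>2 \<le> a\<^sup>2 / 3"
    using hex_quad[OF bV bW] bp pVW zVW by (simp add: power2_eq_square)
  have "2*a*\<bar>p\<bar> \<ge> p\<^sup>2 + q\<^sup>2 \<or> 2*a*\<bar>V\<bar> \<ge> p\<^sup>2 + q\<^sup>2 \<or> 2*a*\<bar>W\<bar> \<ge> p\<^sup>2 + q\<^sup>2"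
  proof (rule ccontr)
    assume c: "\<not> ?thesis"
    have sq: "x*x \<le> (a/2) * \<bar>x\<bar>" if "\<bar>x\<bar> < a/2" for x
    proof -
      have "\<bar>x\<bar>*\<bar>x\<bar> \<le> (a/2)*\<bar>x\<bar>" using that by (intro mult_right_mono) auto
      then show ?thesis by (simp add: abs_mult_self_eq)
    qed
    have "3*(p\<^sup>2+q\<^sup>2) = 2*(p*p + V*V + W*W)"
      using zVW unfolding pVW by (simp add: power2_eq_square algebra_simps)
    also have "\<dots> \<le> a * (\<bar>p\<bar> + \<bar>V\<bar> + \<bar>W\<bar>)" using sq[OF bp] sq[OF bV] sq[OF bW] by (simp add: algebra_simps)
    finally have "3*(p\<^sup>2+q\<^sup>2) \<le> a * \<bar>p\<bar> + a * \<bar>V\<bar> + a * \<bar>W\<bar>" by (simp add: algebra_simps)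
    moreover have "0 \<le> a * \<bar>p\<bar>" "0 \<le> a * \<bar>V\<bar>" "0 \<le> a * \<bar>W\<bar>" using a by auto
    moreover have "2*(a*\<bar>p\<bar>) < p\<^sup>2 + q\<^sup>2" "2*(a*\<bar>V\<bar>) < p\<^sup>2 + q\<^sup>2" "2*(a*\<bar>W\<bar>) < p\<^sup>2 + q\<^sup>2"
      using c by (auto simp: mult.assoc)
    moreover have "\<And>A B C Z::real. 3 * Z \<le> A + B + C \<Longrightarrow> 0 \<le> A \<Longrightarrow> 0 \<le> B \<Longrightarrow> 0 \<le> C \<Longrightarrow>
        2*A < Z \<Longrightarrow> 2*B < Z \<Longrightarrow> 2*C < Z \<Longrightarrow> False" by linarith
    ultimately show False by blast
  qed
  then obtain n where n: "n \<in> Nb_tr a" "(fst n)\<^sup>2 + (snd n)\<^sup>2 = a\<^sup>2" "2*(fst n * p + snd n * q) \<ge> p\<^sup>2 + q\<^sup>2"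
  proof (elim disjE)
    assume h1: "2*a*\<bar>p\<bar> \<ge> p\<^sup>2 + q\<^sup>2"
    show thesis
    proof (cases "p \<ge> 0")
      case True then show thesis using that[of "(a,0)"] h1 by (auto simp: Nb_tr_def)
    next
      case False then show thesis using that[of "(-a,0)"] h1 by (auto simp: Nb_tr_def)
    qed
  next
    assume h1: "2*a*\<bar>V\<bar> \<ge> p\<^sup>2 + q\<^sup>2"
    show thesis
    proof (cases "V \<ge> 0")
      case True
      have "2*((a/2) * p + (a*\<sigma>/2) * q) = 2*a*V" unfolding V_def by (simp add: algebra_simps)
      then show thesis using that[of "(a/2, a*\<sigma>/2)"] h1 True nsq1 by (auto simp: Nb_tr_def \<sigma>_def)
    next
      case False
      have "2*((-a/2) * p + (-(a*\<sigma>/2)) * q) = -2*a*V" unfolding V_def by (simp add: algebra_simps)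
      then show thesis using that[of "(-a/2, -(a*\<sigma>/2))"] h1 False nsq1 by (auto simp: Nb_tr_def \<sigma>_def)
    qed
  next
    assume h1: "2*a*\<bar>W\<bar> \<ge> p\<^sup>2 + q\<^sup>2"
    show thesis
    proof (cases "W \<ge> 0")
      case True
      have "2*((-a/2) * p + (a*\<sigma>/2) * q) = 2*a*W" unfolding W_def by (simp add: algebra_simps)
      then show thesis using that[of "(-a/2, a*\<sigma>/2)"] h1 True nsq1 by (auto simp: Nb_tr_def \<sigma>_def)
    next
      case False
      have "2*((a/2) * p + (-(a*\<sigma>/2)) * q) = -2*a*W" unfolding W_def by (simp add: algebra_simps)
      then show thesis using that[of "(a/2, -(a*\<sigma>/2))"] h1 False nsq1 by (auto simp: Nb_tr_def \<sigma>_def)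
    qed
  qed
  have nle: "norm (n - z) \<le> a"
  proof -
    have "(norm (n - z))\<^sup>2 = (fst n - p)\<^sup>2 + (snd n - q)\<^sup>2" unfolding z by (simp add: norm_sq_pair)
    also have "\<dots> \<le> a\<^sup>2" using dist_expand[of "fst n" p "snd n" q] n(2,3) by linarith
    finally show ?thesis using a by (metis abs_le_square_iff abs_norm_cancel abs_of_pos)
  qed
  from w have "w \<in> lat a (a * sqrt 3 / 2) (1/2)" by simp
  then obtain i j where we: "w = (a * (of_int i + of_int j * (1/2)), a * sqrt 3 / 2 * of_int j)"
    by (rule lat_memE)
  show ?thesis
  proof (cases "(i,j) \<in> {(0,0),(1,0),(-1,0),(0,1),(0,-1),(-1,1),(1,-1)}")
    case True
    then have "w \<in> Nb_tr a" using w unfolding we Nb_tr_def by (auto simp: zero_prod_def)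
    then show ?thesis by blast
  next
    case False
    have hi: "3 \<le> i*i + i*j + j*j" by (rule hex_int[OF False])
    have "(norm w)\<^sup>2 = a\<^sup>2 * of_int (i*i + i*j + j*j)"
      unfolding we norm_sq_pair using \<sigma>2 unfolding \<sigma>_def by (simp add: power2_eq_square algebra_simps)
    also have "\<dots> \<ge> a\<^sup>2 * 3"
    proof -
      have h3: "(3::real) \<le> of_int (i*i + i*j + j*j)" using hi by (metis of_int_le_iff of_int_numeral)
      show ?thesis by (rule mult_left_mono[OF h3]) simp
    qed
    finally have w3: "(norm w)\<^sup>2 \<ge> 3 * a\<^sup>2" by simp
    have "norm w \<ge> \<sigma> * a"
    proof -
      have "(\<sigma> * a)\<^sup>2 = (\<sigma>*\<sigma>) * a\<^sup>2" by (simp add: power2_eq_square algebra_simps)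
      then have "(\<sigma> * a)\<^sup>2 \<le> (norm w)\<^sup>2" using w3 \<sigma>2 by simp
      then show ?thesis by (rule power2_le_imp_le) simp
    qed
    moreover have "norm z * \<sigma> \<le> a"
    proof -
      have "(norm z * \<sigma>)\<^sup>2 = (norm z)\<^sup>2 * (\<sigma>*\<sigma>)" by (simp add: power2_eq_square algebra_simps)
      then have "(norm z * \<sigma>)\<^sup>2 \<le> a\<^sup>2" using z3 nz2 \<sigma>2 by simp
      then show ?thesis by (rule power2_le_imp_le) (use a in simp)
    qed
    moreover have "\<sigma> < 2"
    proof -
      have "\<sigma>\<^sup>2 < 2\<^sup>2" using \<sigma>2 by (simp add: power2_eq_square)
      then show ?thesis by (rule power2_less_imp_less) simp
    qed
    moreover have "norm w - norm z \<le> norm (w - z)" by (rule norm_triangle_ineq2)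
    ultimately have "a \<le> norm (w - z)"
    proof -
      assume A: "\<sigma> * a \<le> norm w" "norm z * \<sigma> \<le> a" "\<sigma> < 2" "norm w - norm z \<le> norm (w - z)"
      have "\<sigma>*(\<sigma>*a) \<le> \<sigma>*norm w" using A(1) \<sigma>0 by (intro mult_left_mono) auto
      then have "\<sigma> * (norm w - norm z) \<ge> \<sigma> * \<sigma> * a - a" using A(2) by (simp add: algebra_simps)
      then have "\<sigma> * (norm w - norm z) \<ge> 2 * a" using \<sigma>2 by simp
      moreover have "\<sigma> * a \<le> 2 * a" using A(3) a by simp
      ultimately have "\<sigma> * a \<le> \<sigma> * (norm w - norm z)" by linarith
      then have "a \<le> norm w - norm z" using \<sigma>0 by simp
      then show ?thesis using A(4) by linarith
    qed
    then have "norm (n - z) \<le> norm (w - z)" using nle by linarith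
    then show ?thesis using n(1) by blast
  qed
qed


lemma tri_cell_Gset:
  assumes a: "a > 0" and \<rho>: "\<rho> > 1"
  defines "k \<equiv> a / (\<rho>\<^sup>2 - 1)"
  shows "{z. \<forall>n\<in>Nb_tr a. \<rho> * norm z < norm (n - z)} = Gset k (k/2) (k * sqrt 3 / 2) (\<rho> * k)"
proof (rule set_eqI)
  fix z :: "real \<times> real"
  obtain p q where z: "z = (p, q)" by (cases z)
  have k: "k \<ge> 0" unfolding k_def using \<rho> a by (simp add: power2_eq_square) (smt (verit) mult_less_cancel_left1 divide_pos_pos)
  have u1: "(1/2)\<^sup>2 + (sqrt 3 / 2)\<^sup>2 = (1::real)" by (simp add: power_divide)
  have u2: "(-1/2)\<^sup>2 + (-(sqrt 3 / 2))\<^sup>2 = (1::real)" by (simp add: power_divide)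
  have u3: "(-1/2)\<^sup>2 + (sqrt 3 / 2)\<^sup>2 = (1::real)" by (simp add: power_divide)
  have u4: "(1/2)\<^sup>2 + (-(sqrt 3 / 2))\<^sup>2 = (1::real)" by (simp add: power_divide)
  define R2 where "R2 = (\<rho>*k)\<^sup>2"
  define s where "s = k * sqrt 3 / 2"
  have e1: "\<rho> * norm z < norm ((a,0) - z) \<longleftrightarrow> (p + k)\<^sup>2 + q\<^sup>2 < R2"
    using apollo[OF a \<rho>, of 1 0 z] unfolding k_def z R2_def by simp
  have e2: "\<rho> * norm z < norm ((-a,0) - z) \<longleftrightarrow> (p - k)\<^sup>2 + q\<^sup>2 < R2"
    using apollo[OF a \<rho>, of "-1" 0 z] unfolding k_def z R2_def by simp
  have e3: "\<rho> * norm z < norm ((a/2, a * sqrt 3 / 2) - z) \<longleftrightarrow> (p + k/2)\<^sup>2 + (q + s)\<^sup>2 < R2"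
    using apollo[OF a \<rho> u1, of z] unfolding k_def z R2_def s_def by simp
  have e4: "\<rho> * norm z < norm ((-a/2, -(a * sqrt 3 / 2)) - z) \<longleftrightarrow> (p - k/2)\<^sup>2 + (q - s)\<^sup>2 < R2"
    using apollo[OF a \<rho> u2, of z] unfolding k_def z R2_def s_def by simp
  have e5: "\<rho> * norm z < norm ((-a/2, a * sqrt 3 / 2) - z) \<longleftrightarrow> (p - k/2)\<^sup>2 + (q + s)\<^sup>2 < R2"
    using apollo[OF a \<rho> u3, of z] unfolding k_def z R2_def s_def by simp
  have e6: "\<rho> * norm z < norm ((a/2, -(a * sqrt 3 / 2)) - z) \<longleftrightarrow> (p + k/2)\<^sup>2 + (q - s)\<^sup>2 < R2"
    using apollo[OF a \<rho> u4, of z] unfolding k_def z R2_def s_def by simp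
  have s0: "s \<ge> 0" unfolding s_def using k by simp
  have k2: "k/2 \<ge> 0" using k by simp
  have s1: "(\<bar>p\<bar> + k)\<^sup>2 + q\<^sup>2 < R2 \<longleftrightarrow> (p + k)\<^sup>2 + q\<^sup>2 < R2 \<and> (p - k)\<^sup>2 + q\<^sup>2 < R2"
    using abs_sq_split[OF k, of p "R2 - q\<^sup>2"] by linarith
  have s2: "(\<bar>p\<bar> + k/2)\<^sup>2 + (\<bar>q\<bar> + s)\<^sup>2 < R2 \<longleftrightarrow>
     (p + k/2)\<^sup>2 + (\<bar>q\<bar> + s)\<^sup>2 < R2 \<and> (p - k/2)\<^sup>2 + (\<bar>q\<bar> + s)\<^sup>2 < R2"
    using abs_sq_split[OF k2, of p "R2 - (\<bar>q\<bar> + s)\<^sup>2"] by linarith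
  have s3: "(x)\<^sup>2 + (\<bar>q\<bar> + s)\<^sup>2 < R2 \<longleftrightarrow> x\<^sup>2 + (q + s)\<^sup>2 < R2 \<and> x\<^sup>2 + (q - s)\<^sup>2 < R2" for x
    using abs_sq_split[OF s0, of q "R2 - x\<^sup>2"] by linarith
  show "z \<in> {z. \<forall>n\<in>Nb_tr a. \<rho> * norm z < norm (n - z)} \<longleftrightarrow> z \<in> Gset k (k/2) (k * sqrt 3 / 2) (\<rho> * k)"
    unfolding Gset_def Nb_tr_def s_def[symmetric] R2_def[symmetric]
    using e1 e2 e3 e4 e5 e6 s1 s2 s3[of "p + k/2"] s3[of "p - k/2"] unfolding z by auto
qed


lemma Gset_bounded:
  assumes k: "k \<ge> 0" and R: "R > 0"
  shows "Gset k kx ky R \<subseteq> ball 0 (2*R)"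
proof
  fix z assume z: "z \<in> Gset k kx ky R"
  obtain p q where zp: "z = (p,q)" by (cases z)
  have h: "(\<bar>p\<bar> + k)\<^sup>2 + q\<^sup>2 < R\<^sup>2" using z zp unfolding Gset_def by auto
  have "\<bar>p\<bar>\<^sup>2 \<le> (\<bar>p\<bar> + k)\<^sup>2" using k by (intro power_mono) auto
  then have "\<bar>p\<bar>\<^sup>2 < R\<^sup>2" "\<bar>q\<bar>\<^sup>2 < R\<^sup>2" using h by (auto simp: add_nonneg_pos) (smt (verit) zero_le_power2)+
  then have "\<bar>p\<bar> < R" "\<bar>q\<bar> < R" using R by (auto intro: power2_less_imp_less)
  moreover have "norm z \<le> \<bar>p\<bar> + \<bar>q\<bar>" using norm_Pair_le[of p q] zp by simp
  ultimately show "z \<in> ball 0 (2*R)" by simp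
qed

lemma k_facts:
  fixes a \<rho> :: real assumes a: "a > 0" and \<rho>: "\<rho> > 1"
  shows "a / (\<rho>\<^sup>2 - 1) > 0" "\<rho> * (a / (\<rho>\<^sup>2 - 1)) - a / (\<rho>\<^sup>2 - 1) = a / (1 + \<rho>)"
proof -
  have r1: "\<rho>\<^sup>2 - 1 > 0" using \<rho> by (simp add: power2_eq_square) (smt (verit) mult_less_cancel_left1)
  then show "a / (\<rho>\<^sup>2 - 1) > 0" using a by simp
  have D: "\<rho>\<^sup>2 - 1 = (\<rho> - 1) * (1 + \<rho>)" by (simp add: power2_eq_square algebra_simps)
  have n: "\<rho> - 1 \<noteq> 0" "1 + \<rho> \<noteq> 0" using \<rho> by auto
  have "\<rho> * (a / (\<rho>\<^sup>2 - 1)) - a / (\<rho>\<^sup>2 - 1) = a * (\<rho> - 1) / (\<rho>\<^sup>2 - 1)"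
    by (simp add: diff_divide_distrib algebra_simps)
  also have "\<dots> = a * (\<rho> - 1) / ((\<rho> - 1) * (1 + \<rho>))" unfolding D ..
  also have "\<dots> = a / (1 + \<rho>)" using n by simp
  finally show "\<rho> * (a / (\<rho>\<^sup>2 - 1)) - a / (\<rho>\<^sup>2 - 1) = a / (1 + \<rho>)" .
qed

lemma square_all:
  fixes a \<rho> :: real
  assumes a: "a > 0" and \<rho>: "\<rho> > 1"
  shows "((\<lambda>r. measure lborel (Q_union (square_lattice a) \<rho> \<inter> ball 0 r) / (pi * r\<^sup>2)) \<longlongrightarrow> fsq \<rho>) at_top"
    "area_fraction (Q_union (square_lattice a) \<rho>) = fsq \<rho>"
    "fsq \<rho> < 4 / (1 + \<rho>)\<^sup>2"
proof -
  define k where "k = a / (\<rho>\<^sup>2 - 1)"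
  define G where "G = Gset k 0 k (\<rho> * k)"
  define L where "L = lat a a 0"
  have k: "k > 0" and mk: "\<rho> * k - k = a / (1 + \<rho>)" unfolding k_def using k_facts[OF a \<rho>] by auto
  have C0: "{z. \<forall>n\<in>Nb_sq a. \<rho> * norm z < norm (n - z)} = G"
    unfolding G_def k_def by (rule sq_cell_Gset[OF a \<rho>])
  have cell: "Q_cell L \<rho> x = (+) x ` G" if x: "x \<in> L" for x
  proof -
    have "Q_cell L \<rho> x = (+) x ` {z. \<forall>n\<in>Nb_sq a. \<rho> * norm z < norm (n - z)}"
    proof (rule cell_char)
      show "finite (Nb_sq a)" "Nb_sq a \<noteq> {}" unfolding Nb_sq_def by auto
      show "Nb_sq a \<subseteq> L - {0}" unfolding L_def by (rule Nb_sq_sub[OF a])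
      show "\<exists>n\<in>Nb_sq a. norm (n - z) \<le> norm (w - z)"
        if "\<forall>n\<in>Nb_sq a. \<rho> * norm z < norm (n - z)" "w \<in> L - {0}" for z w
        using key_sq[OF a _ that(1)] that(2) \<rho> unfolding L_def by auto
    qed (use x lat_diff lat_add in \<open>auto simp: L_def\<close>)
    then show ?thesis unfolding C0 .
  qed
  have QU: "Q_union (square_lattice a) \<rho> = (\<Union>x\<in>L. (+) x ` G)"
    unfolding Q_union_def sq_lat L_def[symmetric] using cell by auto
  have disj: "((+) x ` G) \<inter> ((+) y ` G) = {}" if "x \<in> L" "y \<in> L" "x \<noteq> y" for x y
    using cell_disj[of \<rho> x L y] cell that \<rho> by auto
  have Gb: "G \<subseteq> ball 0 (2 * (\<rho> * k))" unfolding G_def using k \<rho> by (intro Gset_bounded) auto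
  have mG: "measure lborel G = a\<^sup>2 * fsq \<rho>" unfolding G_def k_def by (rule square_area(1)[OF a \<rho>])
  have lim: "((\<lambda>r. measure lborel ((\<Union>x\<in>lat a a 0. (+) x ` G) \<inter> ball 0 r) / (pi * r\<^sup>2)) \<longlongrightarrow> measure lborel G / (a*a)) at_top"
    by (rule density[OF a a _ Gb]) (use Gset_open disj k \<rho> in \<open>auto simp: G_def L_def\<close>)
  have "measure lborel G / (a*a) = fsq \<rho>" unfolding mG using a by (simp add: power2_eq_square)
  then show l: "((\<lambda>r. measure lborel (Q_union (square_lattice a) \<rho> \<inter> ball 0 r) / (pi * r\<^sup>2)) \<longlongrightarrow> fsq \<rho>) at_top"
    using lim unfolding QU L_def by simp
  then show af: "area_fraction (Q_union (square_lattice a) \<rho>) = fsq \<rho>"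
    unfolding area_fraction_def by (rule tendsto_Lim[rotated]) simp
  have "measure lborel G < 4 * (\<rho> * k - k)\<^sup>2" unfolding G_def k_def by (rule square_area(2)[OF a \<rho>])
  then have "a\<^sup>2 * fsq \<rho> < 4 * (a / (1 + \<rho>))\<^sup>2" unfolding mG mk .
  moreover have "4 * (a / (1 + \<rho>))\<^sup>2 = a\<^sup>2 * (4 / (1 + \<rho>)\<^sup>2)" by (simp add: power_divide)
  ultimately have "a\<^sup>2 * fsq \<rho> < a\<^sup>2 * (4 / (1 + \<rho>)\<^sup>2)" by simp
  moreover have pos: "0 < a\<^sup>2" using a by simp
  ultimately show "fsq \<rho> < 4 / (1 + \<rho>)\<^sup>2"
    using mult_less_cancel_left_pos[OF pos, of "fsq \<rho>" "4 / (1 + \<rho>)\<^sup>2"] by blast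
qed

lemma tri_all:
  fixes a \<rho> :: real
  assumes a: "a > 0" and \<rho>: "\<rho> > 1"
  shows "((\<lambda>r. measure lborel (Q_union (triangular_lattice a) \<rho> \<inter> ball 0 r) / (pi * r\<^sup>2)) \<longlongrightarrow> ftr \<rho>) at_top"
    "area_fraction (Q_union (triangular_lattice a) \<rho>) = ftr \<rho>"
    "ftr \<rho> < 4 / (1 + \<rho>)\<^sup>2"
proof -
  define k where "k = a / (\<rho>\<^sup>2 - 1)"
  define G where "G = Gset k (k/2) (k * sqrt 3 / 2) (\<rho> * k)"
  define b where "b = a * sqrt 3 / 2"
  define L where "L = lat a b (1/2)"
  have b: "b > 0" unfolding b_def using a by simp
  have k: "k > 0" and mk: "\<rho> * k - k = a / (1 + \<rho>)" unfolding k_def using k_facts[OF a \<rho>] by auto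
  have C0: "{z. \<forall>n\<in>Nb_tr a. \<rho> * norm z < norm (n - z)} = G"
    unfolding G_def k_def by (rule tri_cell_Gset[OF a \<rho>])
  have cell: "Q_cell L \<rho> x = (+) x ` G" if x: "x \<in> L" for x
  proof -
    have "Q_cell L \<rho> x = (+) x ` {z. \<forall>n\<in>Nb_tr a. \<rho> * norm z < norm (n - z)}"
    proof (rule cell_char)
      show "finite (Nb_tr a)" "Nb_tr a \<noteq> {}" unfolding Nb_tr_def by auto
      show "Nb_tr a \<subseteq> L - {0}" unfolding L_def b_def by (rule Nb_tr_sub[OF a])
      show "\<exists>n\<in>Nb_tr a. norm (n - z) \<le> norm (w - z)"
        if "\<forall>n\<in>Nb_tr a. \<rho> * norm z < norm (n - z)" "w \<in> L - {0}" for z w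
        using key_tr[OF a _ that(1)] that(2) \<rho> unfolding L_def b_def by auto
    qed (use x lat_diff lat_add in \<open>auto simp: L_def\<close>)
    then show ?thesis unfolding C0 .
  qed
  have QU: "Q_union (triangular_lattice a) \<rho> = (\<Union>x\<in>L. (+) x ` G)"
    unfolding Q_union_def tri_lat b_def[symmetric] L_def[symmetric] using cell by auto
  have disj: "((+) x ` G) \<inter> ((+) y ` G) = {}" if "x \<in> L" "y \<in> L" "x \<noteq> y" for x y
    using cell_disj[of \<rho> x L y] cell that \<rho> by auto
  have Gb: "G \<subseteq> ball 0 (2 * (\<rho> * k))" unfolding G_def using k \<rho> by (intro Gset_bounded) auto
  have mG: "measure lborel G = a * b * ftr \<rho>" unfolding G_def k_def b_def by (rule tri_area(1)[OF a \<rho>])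
  have lim: "((\<lambda>r. measure lborel ((\<Union>x\<in>lat a b (1/2). (+) x ` G) \<inter> ball 0 r) / (pi * r\<^sup>2)) \<longlongrightarrow> measure lborel G / (a*b)) at_top"
    by (rule density[OF a b _ Gb]) (use Gset_open disj k \<rho> in \<open>auto simp: G_def L_def\<close>)
  have "measure lborel G / (a*b) = ftr \<rho>" unfolding mG using a b by simp
  then show l: "((\<lambda>r. measure lborel (Q_union (triangular_lattice a) \<rho> \<inter> ball 0 r) / (pi * r\<^sup>2)) \<longlongrightarrow> ftr \<rho>) at_top"
    using lim unfolding QU L_def by simp
  then show af: "area_fraction (Q_union (triangular_lattice a) \<rho>) = ftr \<rho>"
    unfolding area_fraction_def by (rule tendsto_Lim[rotated]) simp
  have "measure lborel G < 2 * sqrt 3 * (\<rho> * k - k)\<^sup>2" unfolding G_def k_def by (rule tri_area(2)[OF a \<rho>])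
  then have "a * b * ftr \<rho> < 2 * sqrt 3 * (a / (1 + \<rho>))\<^sup>2" unfolding mG mk .
  also have "\<dots> = a * b * (4 / (1 + \<rho>)\<^sup>2)" unfolding b_def by (simp add: power_divide power2_eq_square)
  finally have "a * b * ftr \<rho> < a * b * (4 / (1 + \<rho>)\<^sup>2)" .
  moreover have pos: "0 < a * b" using a b by simp
  ultimately show "ftr \<rho> < 4 / (1 + \<rho>)\<^sup>2"
    using mult_less_cancel_left_pos[OF pos, of "ftr \<rho>" "4 / (1 + \<rho>)\<^sup>2"] by (simp add: mult.assoc)
qed

lemma fsq_alt:
  fixes \<rho> :: real assumes \<rho>: "\<rho> > 1"
  shows "fsq \<rho> = (4 * \<rho>\<^sup>2 * (pi/4 - arctan (1/ sqrt (2*\<rho>\<^sup>2 - 1))) - 2 * sqrt (2*\<rho>\<^sup>2 - 1) + 2) / (\<rho>\<^sup>2 - 1)\<^sup>2"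
proof -
  define s where "s = sqrt (2*\<rho>\<^sup>2 - 1)"
  have r1: "\<rho>\<^sup>2 > 1" using \<rho> by (simp add: power2_eq_square) (smt (verit) mult_less_cancel_left1)
  have s0: "s > 0" unfolding s_def using r1 by simp
  have "arctan s - arctan 1 = arctan ((s - 1) / (1 + s * 1))" by (rule arctan_diff) (use s0 in auto)
  then have "arctan ((s - 1) / (s + 1)) = pi/2 - arctan (1/s) - pi/4"
    using arctan_recip_pos[OF s0] arctan_one by (simp add: add.commute)
  then show ?thesis unfolding fsq_def s_def[symmetric] by simp
qed

lemma ftr_alt:
  fixes \<rho> :: real assumes \<rho>: "\<rho> > 1"
  shows "ftr \<rho> = (4 * sqrt 3 * \<rho>\<^sup>2 * (pi/6 - arctan (1/sqrt (4*\<rho>\<^sup>2 - 1)))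
               - sqrt 3 * sqrt (4*\<rho>\<^sup>2 - 1) + 3) / (\<rho>\<^sup>2 - 1)\<^sup>2"
proof -
  define r where "r = sqrt (4*\<rho>\<^sup>2 - 1)"
  have r1: "\<rho>\<^sup>2 > 1" using \<rho> by (simp add: power2_eq_square) (smt (verit) mult_less_cancel_left1)
  have r0: "r > 0" unfolding r_def using r1 by simp
  have "arctan r - arctan (sqrt 3) = arctan ((r - sqrt 3) / (1 + r * sqrt 3))" by (rule arctan_diff) (use r0 in auto)
  moreover have "1 + r * sqrt 3 = sqrt 3 * r + 1" by (simp add: algebra_simps)
  ultimately have "arctan ((r - sqrt 3) / (sqrt 3 * r + 1)) = pi/2 - arctan (1/r) - pi/3"
    using arctan_recip_pos[OF r0] arctan_sqrt3 by simp
  then show ?thesis unfolding ftr_def r_def[symmetric] by simp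
qed

theorem lemma8:
  fixes a :: real
  assumes "a > 0"
  shows
   "(\<forall>\<rho>>1.
       ((\<lambda>r. measure lborel (Q_union (square_lattice a) \<rho> \<inter> ball 0 r) / (pi * r\<^sup>2))
         \<longlongrightarrow> (4 * \<rho>\<^sup>2 * arctan ((sqrt (2*\<rho>\<^sup>2 - 1) - 1) / (sqrt (2*\<rho>\<^sup>2 - 1) + 1))
               - 2 * sqrt (2*\<rho>\<^sup>2 - 1) + 2) / (\<rho>\<^sup>2 - 1)\<^sup>2) at_top
     \<and> area_fraction (Q_union (square_lattice a) \<rho>) < 4 / (1 + \<rho>)\<^sup>2)
  \<and> (\<forall>\<rho>>1.
       ((\<lambda>r. measure lborel (Q_union (triangular_lattice a) \<rho> \<inter> ball 0 r) / (pi * r\<^sup>2))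
         \<longlongrightarrow> (4 * sqrt 3 * \<rho>\<^sup>2 * arctan ((sqrt (4*\<rho>\<^sup>2 - 1) - sqrt 3) / (sqrt 3 * sqrt (4*\<rho>\<^sup>2 - 1) + 1))
               - sqrt 3 * sqrt (4*\<rho>\<^sup>2 - 1) + 3) / (\<rho>\<^sup>2 - 1)\<^sup>2) at_top
     \<and> area_fraction (Q_union (triangular_lattice a) \<rho>) < 4 / (1 + \<rho>)\<^sup>2)
  \<and> (\<lambda>\<rho>. area_fraction (Q_union (square_lattice a) \<rho>)) \<sim>[at_top] (\<lambda>\<rho>. pi / \<rho>\<^sup>2)
  \<and> (\<lambda>\<rho>. area_fraction (Q_union (triangular_lattice a) \<rho>)) \<sim>[at_top] (\<lambda>\<rho>. 2 * pi / sqrt 3 / \<rho>\<^sup>2)"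
proof (intro conjI allI impI)
  fix \<rho> :: real assume \<rho>: "\<rho> > 1"
  show "((\<lambda>r. measure lborel (Q_union (square_lattice a) \<rho> \<inter> ball 0 r) / (pi * r\<^sup>2))
         \<longlongrightarrow> (4 * \<rho>\<^sup>2 * arctan ((sqrt (2*\<rho>\<^sup>2 - 1) - 1) / (sqrt (2*\<rho>\<^sup>2 - 1) + 1))
               - 2 * sqrt (2*\<rho>\<^sup>2 - 1) + 2) / (\<rho>\<^sup>2 - 1)\<^sup>2) at_top"
    using square_all(1)[OF assms \<rho>] unfolding fsq_def .
  show "area_fraction (Q_union (square_lattice a) \<rho>) < 4 / (1 + \<rho>)\<^sup>2"
    using square_all(2,3)[OF assms \<rho>] by simp
next
  fix \<rho> :: real assume \<rho>: "\<rho> > 1"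
  show "((\<lambda>r. measure lborel (Q_union (triangular_lattice a) \<rho> \<inter> ball 0 r) / (pi * r\<^sup>2))
         \<longlongrightarrow> (4 * sqrt 3 * \<rho>\<^sup>2 * arctan ((sqrt (4*\<rho>\<^sup>2 - 1) - sqrt 3) / (sqrt 3 * sqrt (4*\<rho>\<^sup>2 - 1) + 1))
               - sqrt 3 * sqrt (4*\<rho>\<^sup>2 - 1) + 3) / (\<rho>\<^sup>2 - 1)\<^sup>2) at_top"
    using tri_all(1)[OF assms \<rho>] unfolding ftr_def .
  show "area_fraction (Q_union (triangular_lattice a) \<rho>) < 4 / (1 + \<rho>)\<^sup>2"
    using tri_all(2,3)[OF assms \<rho>] by simp
next
  have as: "(\<lambda>\<rho>::real. (4 * \<rho>\<^sup>2 * (pi/4 - arctan (1/ sqrt (2*\<rho>\<^sup>2 - 1)))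
               - 2 * sqrt (2*\<rho>\<^sup>2 - 1) + 2) / (\<rho>\<^sup>2 - 1)\<^sup>2) \<sim>[at_top] (\<lambda>\<rho>. pi / \<rho>\<^sup>2)"
    by real_asymp
  show "(\<lambda>\<rho>. area_fraction (Q_union (square_lattice a) \<rho>)) \<sim>[at_top] (\<lambda>\<rho>. pi / \<rho>\<^sup>2)"
  proof (rule asymp_equiv_transfer[OF as])
    show "\<forall>\<^sub>F x in at_top. (4 * x\<^sup>2 * (pi/4 - arctan (1/ sqrt (2*x\<^sup>2 - 1))) - 2 * sqrt (2*x\<^sup>2 - 1) + 2) / (x\<^sup>2 - 1)\<^sup>2
        = area_fraction (Q_union (square_lattice a) x)"
      using eventually_gt_at_top[of "1::real"]
      by eventually_elim (simp add: square_all(2)[OF assms] fsq_alt)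
  qed simp
next
  have as: "(\<lambda>\<rho>::real. (4 * sqrt 3 * \<rho>\<^sup>2 * (pi/6 - arctan (1/sqrt (4*\<rho>\<^sup>2 - 1)))
               - sqrt 3 * sqrt (4*\<rho>\<^sup>2 - 1) + 3) / (\<rho>\<^sup>2 - 1)\<^sup>2) \<sim>[at_top] (\<lambda>\<rho>. (4 * sqrt 3 * pi/6) / \<rho>\<^sup>2)"
    by real_asymp
  have c: "4 * sqrt 3 * pi / 6 = 2 * pi / sqrt 3"
  proof -
    have "sqrt 3 * sqrt 3 = (3::real)" by simp
    then show ?thesis by (simp add: field_simps)
  qed
  show "(\<lambda>\<rho>. area_fraction (Q_union (triangular_lattice a) \<rho>)) \<sim>[at_top] (\<lambda>\<rho>. 2 * pi / sqrt 3 / \<rho>\<^sup>2)"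
  proof (rule asymp_equiv_transfer[OF as])
    show "\<forall>\<^sub>F x in at_top. (4 * sqrt 3 * x\<^sup>2 * (pi/6 - arctan (1/sqrt (4*x\<^sup>2 - 1))) - sqrt 3 * sqrt (4*x\<^sup>2 - 1) + 3) / (x\<^sup>2 - 1)\<^sup>2
        = area_fraction (Q_union (triangular_lattice a) x)"
      using eventually_gt_at_top[of "1::real"]
      by eventually_elim (simp add: tri_all(2)[OF assms] ftr_alt)
    show "\<forall>\<^sub>F x in at_top. 4 * sqrt 3 * pi / 6 / x\<^sup>2 = 2 * pi / sqrt 3 / x\<^sup>2"
      using c by simp
  qed
qed


end
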